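(* Let $n=3$ and $k\ge 2$. Let $A$ be a connectivity class of external positions which is not the frame class, and let $\pi$ be an even permutation of $A$. Then there exists a combination $g$ such that $g(p)=\pi(p)$ for all $p\in A$ and $g(q,l)=(q,l)$ for every external position $q\notin A$ and every $l\in B(q)$.
   Context: Here $n=3$, $k\ge2$, $M=\{0,\dots,k-1\}$. Positions are $p\in M^3$; $B(p)=\{i:p_i\in\{0,k-1\}\}$, $p$ external if $B(p)\ne\emptyset$ (internal positions are disregarded). For distinct $i,j$, $\psi_{i,j}:M^3\to M^3$ is $(\psi_{i,j}p)_i=k-1-p_j$, $(\psi_{i,j}p)_j=p_i$, the remaining coordinate unchanged; $\tau_{ij}$ is the transposition of $i,j$. A move is given by distinct $i,j$ and a constant $c\in M$ for the remaining coordinate: it applies $\psi_{i,j}$ to all positions whose remaining coordinate equals $c$ and fixes the others; it acts on $X=\{(p,l): p \text{ external}, l\in B(p)\}$ (orientation faces of cubies) by $(p,l)\mapsto(\psi_{i,j}(p),\tau_{ij}(l))$ for $p$ in its layer, fixing other pairs. A combination is a finite sequence of moves acting by composition. Connectivity classes are orbits of external positions under combinations. For odd $k$ the frame class is the set of positions with exactly one coordinate in $\{0,k-1\}$ and the others equal to $(k-1)/2$; for even $k$ there is none. *)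

theory Defs
  imports "HOL-Combinatorics.Combinatorics"
begin

text \<open>Positions in M^3 with M = {0..<k}: functions nat => nat, coordinates 0,1,2,
  all other values fixed to 0 (canonical representation).\<close>

definition Mpos :: "nat \<Rightarrow> (nat \<Rightarrow> nat) set" where
  "Mpos k = {p. \<forall>i. (i < 3 \<longrightarrow> p i < k) \<and> (3 \<le> i \<longrightarrow> p i = 0)}"

definition Bset :: "nat \<Rightarrow> (nat \<Rightarrow> nat) \<Rightarrow> nat set" where
  "Bset k p = {i. i < 3 \<and> (p i = 0 \<or> p i = k - 1)}"

definition external :: "nat \<Rightarrow> (nat \<Rightarrow> nat) \<Rightarrow> bool" where
  "external k p \<longleftrightarrow> p \<in> Mpos k \<and> Bset k p \<noteq> {}"

definition psi :: "nat \<Rightarrow> nat \<Rightarrow> nat \<Rightarrow> (nat \<Rightarrow> nat) \<Rightarrow> (nat \<Rightarrow> nat)" where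
  "psi k i j p = p(i := k - 1 - p j, j := p i)"

definition rem :: "nat \<Rightarrow> nat \<Rightarrow> nat" where
  "rem i j = 3 - i - j"

definition valid_move :: "nat \<Rightarrow> nat \<times> nat \<times> nat \<Rightarrow> bool" where
  "valid_move k m = (case m of (i, j, c) \<Rightarrow> i < 3 \<and> j < 3 \<and> i \<noteq> j \<and> c < k)"

definition move_pos :: "nat \<Rightarrow> nat \<times> nat \<times> nat \<Rightarrow> (nat \<Rightarrow> nat) \<Rightarrow> (nat \<Rightarrow> nat)" where
  "move_pos k m p = (case m of (i, j, c) \<Rightarrow> if p (rem i j) = c then psi k i j p else p)"

definition move_X :: "nat \<Rightarrow> nat \<times> nat \<times> nat \<Rightarrow> (nat \<Rightarrow> nat) \<times> nat \<Rightarrow> (nat \<Rightarrow> nat) \<times> nat" where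
  "move_X k m x = (case m of (i, j, c) \<Rightarrow> case x of (p, l) \<Rightarrow>
      if p (rem i j) = c then (psi k i j p, transpose i j l) else (p, l))"

definition combination :: "nat \<Rightarrow> (nat \<times> nat \<times> nat) list \<Rightarrow> bool" where
  "combination k ms \<longleftrightarrow> (\<forall>m \<in> set ms. valid_move k m)"

definition comb_pos :: "nat \<Rightarrow> (nat \<times> nat \<times> nat) list \<Rightarrow> (nat \<Rightarrow> nat) \<Rightarrow> (nat \<Rightarrow> nat)" where
  "comb_pos k ms = foldr (\<lambda>m f. move_pos k m \<circ> f) ms id"

definition comb_X :: "nat \<Rightarrow> (nat \<times> nat \<times> nat) list \<Rightarrow> (nat \<Rightarrow> nat) \<times> nat \<Rightarrow> (nat \<Rightarrow> nat) \<times> nat" where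
  "comb_X k ms = foldr (\<lambda>m f. move_X k m \<circ> f) ms id"

definition conn_class :: "nat \<Rightarrow> (nat \<Rightarrow> nat) \<Rightarrow> (nat \<Rightarrow> nat) set" where
  "conn_class k p = {comb_pos k ms p | ms. combination k ms}"

definition is_conn_class :: "nat \<Rightarrow> (nat \<Rightarrow> nat) set \<Rightarrow> bool" where
  "is_conn_class k A \<longleftrightarrow> (\<exists>p. external k p \<and> A = conn_class k p)"

text \<open>Frame class (meaningful for odd k).\<close>
definition frame_class :: "nat \<Rightarrow> (nat \<Rightarrow> nat) set" where
  "frame_class k = {p \<in> Mpos k. card (Bset k p) = 1 \<and>
      (\<forall>i < 3. i \<notin> Bset k p \<longrightarrow> p i = (k - 1) div 2)}"

end

theory Submission
  imports Defs
begin

definition cyc3 :: "'a \<Rightarrow> 'a \<Rightarrow> 'a \<Rightarrow> 'a \<Rightarrow> 'a" where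
  "cyc3 x y z = Transposition.transpose x y \<circ> Transposition.transpose y z"

lemma cyc3_app: "distinct [x,y,z] \<Longrightarrow> cyc3 x y z w = (if w = x then y else if w = y then z else if w = z then x else w)"
  by (auto simp: cyc3_def transpose_def)

lemma cyc3_rot: "x \<noteq> y \<Longrightarrow> y \<noteq> z \<Longrightarrow> x \<noteq> z \<Longrightarrow> cyc3 x y z = cyc3 y z x"
  by (auto simp: cyc3_app fun_eq_iff)

lemma cyc3_inv: "x \<noteq> y \<Longrightarrow> y \<noteq> z \<Longrightarrow> x \<noteq> z \<Longrightarrow> cyc3 y x z = cyc3 x y z \<circ> cyc3 x y z"
  by (auto simp: cyc3_app fun_eq_iff)

lemma cyc3_id1: "distinct [u,v,x,y] \<Longrightarrow> cyc3 u x y = cyc3 u v y \<circ> (cyc3 u v x \<circ> cyc3 u v x)"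
  by (auto simp: cyc3_app fun_eq_iff)

lemma cyc3_id2: "distinct [u,v,x,y] \<Longrightarrow> cyc3 v x y = (cyc3 u v y \<circ> cyc3 u v y) \<circ> cyc3 u v x"
  by (auto simp: cyc3_app fun_eq_iff)

lemma cyc3_id3: "distinct [u,v,x,y,z] \<Longrightarrow>
   cyc3 x y z = cyc3 u v x \<circ> (cyc3 u v z \<circ> cyc3 u v z) \<circ> cyc3 u v y \<circ> (cyc3 u v x \<circ> cyc3 u v x)"
  by (auto simp: cyc3_app fun_eq_iff)

lemma gen_even:
  fixes R :: "('a \<Rightarrow> 'a) set"
  assumes fin: "finite S" and u: "u \<in> S" and v: "v \<in> S" and uv: "u \<noteq> v"
  and idR: "id \<in> R" and compR: "\<And>f g. f \<in> R \<Longrightarrow> g \<in> R \<Longrightarrow> f \<circ> g \<in> R"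
  and base: "\<And>x. x \<in> S \<Longrightarrow> x \<noteq> u \<Longrightarrow> x \<noteq> v \<Longrightarrow> cyc3 u v x \<in> R"
  and p: "p permutes S" "evenperm p"
  shows "p \<in> R"
proof -
  have all3: "cyc3 x y z \<in> R" if "x \<in> S" "y \<in> S" "z \<in> S" "distinct [x,y,z]" for x y z
  proof -
    have sq: "cyc3 u v w \<circ> cyc3 u v w \<in> R" if "w \<in> S" "w \<noteq> u" "w \<noteq> v" for w
      using compR base that by blast
    have gen: "cyc3 x y z \<in> R" if "u = x" "x \<in> S" "y \<in> S" "z \<in> S" "distinct [x,y,z]" for x y z
    proof (cases "v = y")
      case True thus ?thesis using that base by auto
    next
      case False note F1 = this
      show ?thesis
      proof (cases "v = z")
        case True
        then have "cyc3 x y z = cyc3 v x y" using that cyc3_rot[of y z x] cyc3_rot[of x y z] by auto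
        also have "\<dots> = cyc3 x v y \<circ> cyc3 x v y" using that True cyc3_inv[of x v y] by auto
        finally show ?thesis using sq[of y] that True by auto
      next
        case False
        then show ?thesis using that F1 cyc3_id1[of u v y z] compR base sq uv by auto
      qed
    qed
    have genv: "cyc3 x y z \<in> R" if "v = x" "x \<in> S" "y \<in> S" "z \<in> S" "distinct [x,y,z]" "u \<notin> {y,z}" for x y z
      using that cyc3_id2[of u v y z] compR base sq uv by auto
    consider "u = x" | "u = y" | "u = z" | "u \<notin> {x,y,z}" "v = x" | "u \<notin> {x,y,z}" "v = y"
      | "u \<notin> {x,y,z}" "v = z" | "u \<notin> {x,y,z}" "v \<notin> {x,y,z}" by blast
    then show ?thesis
    proof cases
      case 1 thus ?thesis using gen that by blast
    next
      case 2 thus ?thesis using gen[of y z x] that cyc3_rot[of x y z] by auto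
    next
      case 3 thus ?thesis using gen[of z x y] that cyc3_rot[of x y z] cyc3_rot[of y z x] by auto
    next
      case 4 thus ?thesis using genv that by auto
    next
      case 5 thus ?thesis using genv[of y z x] that cyc3_rot[of x y z] by auto
    next
      case 6 thus ?thesis using genv[of z x y] that cyc3_rot[of x y z] cyc3_rot[of y z x] by auto
    next
      case 7
      have "cyc3 u v x \<circ> (cyc3 u v z \<circ> cyc3 u v z) \<circ> cyc3 u v y \<circ> (cyc3 u v x \<circ> cyc3 u v x) \<in> R"
        using compR base sq that 7 by auto
      thus ?thesis using cyc3_id3[of u v x y z] that 7 uv by auto
    qed
  qed
  have tt: "Transposition.transpose a b \<circ> Transposition.transpose c d \<in> R"
    if H: "a \<in> S" "b \<in> S" "c \<in> S" "d \<in> S" "a \<noteq> b" "c \<noteq> d" for a b c d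
  proof -
    have T: "Transposition.transpose a b = Transposition.transpose b a" by (simp add: transpose_commute)
    have T2: "Transposition.transpose c d = Transposition.transpose d c" by (simp add: transpose_commute)
    consider "{a,b} = {c,d}" | "b = c" "a \<noteq> d" | "b = d" "a \<noteq> c" | "a = c" "b \<noteq> d" | "a = d" "b \<noteq> c"
      | "distinct [a,b,c,d]" using H(5,6) by (cases "a = c"; cases "a = d"; cases "b = c"; cases "b = d"; simp; blast)
    then show ?thesis
    proof cases
      case 1
      then have "Transposition.transpose a b \<circ> Transposition.transpose c d = id"
        using that by (auto simp: fun_eq_iff transpose_def doubleton_eq_iff)
      thus ?thesis using idR by simp
    next
      case 2 thus ?thesis using all3[of a b d] that by (auto simp: cyc3_def)
    next
      case 3 thus ?thesis using all3[of a b c] that T2 by (auto simp: cyc3_def)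
    next
      case 4 thus ?thesis using all3[of b a d] that T by (auto simp: cyc3_def)
    next
      case 5 thus ?thesis using all3[of b a c] that T T2 by (auto simp: cyc3_def)
    next
      case 6
      have "Transposition.transpose a b \<circ> Transposition.transpose c d = cyc3 a b c \<circ> cyc3 b c d"
        using 6 by (intro ext) (simp add: cyc3_def transpose_def)
      thus ?thesis using all3[of a b c] all3[of b c d] 6 that compR by auto
    qed
  qed
  have perm: "permutation q" if "q permutes S" for q
    using that fin permutation_permutes by blast
  have "(evenperm p \<longrightarrow> p \<in> R) \<and> (\<not> evenperm p \<longrightarrow> Transposition.transpose u v \<circ> p \<in> R)"
    using p(1) fin
  proof (induction rule: permutes_induct)
    case id
    then show ?case using idR evenperm_id by blast
  next
    case (swap a b q)
    have pq: "permutation q" using perm swap by blast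
    have ev: "evenperm (Transposition.transpose a b \<circ> q) = (\<not> evenperm q)"
      using evenperm_comp[OF permutation_swap_id pq, of a b] swap(3) evenperm_swap[of a b] by simp
    show ?case
    proof (cases "evenperm q")
      case True
      then have "q \<in> R" using swap by blast
      then have "(Transposition.transpose u v \<circ> Transposition.transpose a b) \<circ> q \<in> R"
        using compR tt[of u v a b] swap u v uv by blast
      then have "Transposition.transpose u v \<circ> (Transposition.transpose a b \<circ> q) \<in> R"
        by (simp only: comp_assoc)
      then show ?thesis using ev True by blast
    next
      case False
      then have q: "Transposition.transpose u v \<circ> q \<in> R" using swap by blast
      have "(Transposition.transpose a b \<circ> Transposition.transpose u v) \<circ> (Transposition.transpose u v \<circ> q) \<in> R"
        using compR tt[of a b u v] swap u v uv q by blast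
      moreover have "(Transposition.transpose a b \<circ> Transposition.transpose u v) \<circ> (Transposition.transpose u v \<circ> q)
          = Transposition.transpose a b \<circ> q"
        by (simp add: fun_eq_iff)
      ultimately have "Transposition.transpose a b \<circ> q \<in> R" by metis
      then show ?thesis using ev False by blast
    qed
  qed
  thus ?thesis using p by blast
qed


definition vm :: "nat \<times> nat \<times> nat \<Rightarrow> bool" where
  "vm m = (case m of (i,j,c) \<Rightarrow> i < 3 \<and> j < 3 \<and> i \<noteq> j)"

lemma rem_facts: "i < 3 \<Longrightarrow> j < 3 \<Longrightarrow> i \<noteq> j \<Longrightarrow> rem i j < 3 \<and> rem i j \<noteq> i \<and> rem i j \<noteq> j"
  unfolding rem_def by arith

lemma Mpos_iff: "p \<in> Mpos k \<longleftrightarrow> (\<forall>i<3. p i < k) \<and> (\<forall>i\<ge>3. p i = 0)"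
  by (auto simp: Mpos_def)

lemma psi_Mpos: "p \<in> Mpos k \<Longrightarrow> i < 3 \<Longrightarrow> j < 3 \<Longrightarrow> psi k i j p \<in> Mpos k"
  by (auto simp: Mpos_def psi_def)

lemma move_pos_Mpos: "p \<in> Mpos k \<Longrightarrow> vm m \<Longrightarrow> move_pos k m p \<in> Mpos k"
  by (auto simp: move_pos_def vm_def psi_Mpos split: prod.splits)

lemma psi_rem: "i < 3 \<Longrightarrow> j < 3 \<Longrightarrow> i \<noteq> j \<Longrightarrow> psi k i j p (rem i j) = p (rem i j)"
  using rem_facts[of i j] by (auto simp: psi_def)

lemma psi4: "p \<in> Mpos k \<Longrightarrow> i < 3 \<Longrightarrow> j < 3 \<Longrightarrow> i \<noteq> j \<Longrightarrow> psi k i j (psi k i j (psi k i j (psi k i j p))) = p"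
  unfolding Mpos_def psi_def by (rule ext) auto

lemma move_pos_eq: "move_pos k (i,j,c) p = (if p (rem i j) = c then psi k i j p else p)"
  by (simp add: move_pos_def)

lemma move4: "p \<in> Mpos k \<Longrightarrow> vm m \<Longrightarrow> move_pos k m (move_pos k m (move_pos k m (move_pos k m p))) = p"
proof -
  assume p: "p \<in> Mpos k" and v: "vm m"
  obtain i j c where m: "m = (i,j,c)" by (metis prod_cases3)
  have ij: "i < 3" "j < 3" "i \<noteq> j" using v m by (auto simp: vm_def)
  show ?thesis
  proof (cases "p (rem i j) = c")
    case True
    have r1: "psi k i j p (rem i j) = c" using True psi_rem[OF ij] by simp
    have r2: "psi k i j (psi k i j p) (rem i j) = c" using r1 psi_rem[OF ij] by simp
    have r3: "psi k i j (psi k i j (psi k i j p)) (rem i j) = c" using r2 psi_rem[OF ij] by simp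
    show ?thesis unfolding m move_pos_eq using True r1 r2 r3 psi4[OF p ij] by simp
  next
    case False
    then show ?thesis unfolding m move_pos_eq by simp
  qed
qed

lemma move_X_eq: "move_X k m (p,l) = (move_pos k m p, (case m of (i,j,c) \<Rightarrow> if p (rem i j) = c then transpose i j l else l))"
  by (auto simp: move_X_def move_pos_def split: prod.splits)

lemma transpose4: "transpose i j (transpose i j (transpose i j (transpose i j l))) = (l::nat)"
  by simp

lemma moveX4: "p \<in> Mpos k \<Longrightarrow> vm m \<Longrightarrow> move_X k m (move_X k m (move_X k m (move_X k m (p,l)))) = (p,l)"
proof -
  assume p: "p \<in> Mpos k" and v: "vm m"
  obtain i j c where m: "m = (i,j,c)" by (metis prod_cases3)
  have ij: "i < 3" "j < 3" "i \<noteq> j" using v m by (auto simp: vm_def)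
  show ?thesis
  proof (cases "p (rem i j) = c")
    case True
    have r1: "psi k i j p (rem i j) = c" using True psi_rem[OF ij] by simp
    have r2: "psi k i j (psi k i j p) (rem i j) = c" using r1 psi_rem[OF ij] by simp
    have r3: "psi k i j (psi k i j (psi k i j p)) (rem i j) = c" using r2 psi_rem[OF ij] by simp
    show ?thesis unfolding m move_X_eq move_pos_eq using True r1 r2 r3 psi4[OF p ij] by simp
  next
    case False
    then show ?thesis unfolding m move_X_eq move_pos_eq by simp
  qed
qed

lemma comb_pos_Nil[simp]: "comb_pos k [] = id" by (simp add: comb_pos_def)
lemma comb_pos_Cons[simp]: "comb_pos k (m # ms) = move_pos k m \<circ> comb_pos k ms" by (simp add: comb_pos_def)
lemma comb_pos_append: "comb_pos k (xs @ ys) = comb_pos k xs \<circ> comb_pos k ys"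
  by (induction xs) auto
lemma comb_X_Nil[simp]: "comb_X k [] = id" by (simp add: comb_X_def)
lemma comb_X_Cons[simp]: "comb_X k (m # ms) = move_X k m \<circ> comb_X k ms" by (simp add: comb_X_def)
lemma comb_X_append: "comb_X k (xs @ ys) = comb_X k xs \<circ> comb_X k ys"
  by (induction xs) auto

lemma comb_pos_Mpos: "p \<in> Mpos k \<Longrightarrow> \<forall>m\<in>set ms. vm m \<Longrightarrow> comb_pos k ms p \<in> Mpos k"
  by (induction ms) (auto simp: move_pos_Mpos)

lemma move_X_fst: "fst (move_X k m x) = move_pos k m (fst x)"
  by (cases x) (simp add: move_X_eq)

lemma comb_X_fst': "fst (comb_X k ms x) = comb_pos k ms (fst x)"
  by (induction ms) (auto simp: move_X_fst)

lemma comb_X_fst: "fst (comb_X k ms (p,l)) = comb_pos k ms p"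
  using comb_X_fst'[of k ms "(p,l)"] by simp

definition invl :: "(nat \<times> nat \<times> nat) list \<Rightarrow> (nat \<times> nat \<times> nat) list" where
  "invl ms = concat (map (\<lambda>m. [m,m,m]) (rev ms))"

lemma invl_Cons: "invl (m # ms) = invl ms @ [m,m,m]"
  by (simp add: invl_def)

lemma invl_set: "set (invl ms) = set ms"
  by (auto simp: invl_def)

lemma inv_left: "p \<in> Mpos k \<Longrightarrow> \<forall>m\<in>set ms. vm m \<Longrightarrow> comb_pos k (invl ms) (comb_pos k ms p) = p"
proof (induction ms arbitrary: p)
  case Nil then show ?case by (simp add: invl_def)
next
  case (Cons m ms)
  have "comb_pos k ms p \<in> Mpos k" using Cons comb_pos_Mpos by auto
  then show ?case using Cons by (simp add: invl_Cons comb_pos_append move4)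
qed

lemma inv_right: "p \<in> Mpos k \<Longrightarrow> \<forall>m\<in>set ms. vm m \<Longrightarrow> comb_pos k ms (comb_pos k (invl ms) p) = p"
proof (induction ms arbitrary: p)
  case Nil then show ?case by (simp add: invl_def)
next
  case (Cons m ms)
  have M: "move_pos k m (move_pos k m (move_pos k m p)) \<in> Mpos k" using Cons move_pos_Mpos by auto
  have "move_pos k m (move_pos k m (move_pos k m (move_pos k m p))) = p" using Cons move4 by auto
  then show ?case using Cons M by (simp add: invl_Cons comb_pos_append)
qed

lemma invX_left: "p \<in> Mpos k \<Longrightarrow> \<forall>m\<in>set ms. vm m \<Longrightarrow> comb_X k (invl ms) (comb_X k ms (p,l)) = (p,l)"
proof (induction ms arbitrary: p l)
  case Nil then show ?case by (simp add: invl_def)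
next
  case (Cons m ms)
  obtain p' l' where E: "comb_X k ms (p,l) = (p',l')" by (metis surj_pair)
  have "p' = comb_pos k ms p" using comb_X_fst[of k ms p l] E by simp
  then have "p' \<in> Mpos k" using Cons comb_pos_Mpos by auto
  then show ?case using Cons.IH[of p l] Cons.prems E by (simp add: invl_Cons comb_X_append moveX4)
qed

lemma invX_right: "p \<in> Mpos k \<Longrightarrow> \<forall>m\<in>set ms. vm m \<Longrightarrow> comb_X k ms (comb_X k (invl ms) (p,l)) = (p,l)"
proof (induction ms arbitrary: p l)
  case Nil then show ?case by (simp add: invl_def)
next
  case (Cons m ms)
  obtain p' l' where E: "move_X k m (move_X k m (move_X k m (p,l))) = (p',l')" by (metis surj_pair)
  have "p' = move_pos k m (move_pos k m (move_pos k m p))" using arg_cong[OF E, of fst]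
    by (simp add: move_X_fst)
  then have Mp: "p' \<in> Mpos k" using Cons move_pos_Mpos by auto
  have M4: "move_X k m (p',l') = (p,l)" using moveX4[of p k m l] Cons.prems E by simp
  have IH: "comb_X k ms (comb_X k (invl ms) (p',l')) = (p',l')" using Cons.IH[of p' l'] Cons.prems Mp by simp
  have "comb_X k (m # ms) (comb_X k (invl (m # ms)) (p,l)) = move_X k m (comb_X k ms (comb_X k (invl ms) (move_X k m (move_X k m (move_X k m (p,l))))))"
    by (simp add: invl_Cons comb_X_append)
  also have "\<dots> = (p,l)" unfolding E IH M4 ..
  finally show ?case .
qed


lemma combination_vm: "combination k ms \<Longrightarrow> \<forall>m\<in>set ms. vm m"
  by (auto simp: combination_def valid_move_def vm_def)

lemma combination_append: "combination k (xs @ ys) \<longleftrightarrow> combination k xs \<and> combination k ys"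
  by (auto simp: combination_def)

lemma combination_invl: "combination k (invl ms) \<longleftrightarrow> combination k ms"
  by (simp add: combination_def invl_set)

lemma cc_self: "p \<in> conn_class k p"
  unfolding conn_class_def by (rule CollectI, rule exI[of _ "[]"]) (simp add: combination_def)

lemma cc_comb: "q \<in> conn_class k p \<Longrightarrow> combination k ms \<Longrightarrow> comb_pos k ms q \<in> conn_class k p"
  unfolding conn_class_def
proof -
  assume "q \<in> {comb_pos k ms p |ms. combination k ms}" "combination k ms"
  then obtain ms' where "q = comb_pos k ms' p" "combination k ms'" by blast
  then have "comb_pos k ms q = comb_pos k (ms @ ms') p" "combination k (ms @ ms')"
    using \<open>combination k ms\<close> by (auto simp: comb_pos_append combination_append)
  then show "comb_pos k ms q \<in> {comb_pos k ms p |ms. combination k ms}" by blast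
qed

lemma cc_Mpos: "p \<in> Mpos k \<Longrightarrow> q \<in> conn_class k p \<Longrightarrow> q \<in> Mpos k"
  unfolding conn_class_def using comb_pos_Mpos combination_vm by blast

lemma cc_sym: "p \<in> Mpos k \<Longrightarrow> q \<in> conn_class k p \<Longrightarrow> p \<in> conn_class k q"
proof -
  assume p: "p \<in> Mpos k" and "q \<in> conn_class k p"
  then obtain ms where q: "q = comb_pos k ms p" "combination k ms" unfolding conn_class_def by blast
  then have "comb_pos k (invl ms) q = p" using inv_left[OF p] combination_vm by blast
  moreover have "combination k (invl ms)" using q combination_invl by blast
  ultimately show ?thesis using cc_comb[OF cc_self] by metis
qed

lemma cc_trans: "q \<in> conn_class k p \<Longrightarrow> r \<in> conn_class k q \<Longrightarrow> r \<in> conn_class k p"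
proof -
  assume "q \<in> conn_class k p" "r \<in> conn_class k q"
  then obtain ms where r: "r = comb_pos k ms q" "combination k ms" unfolding conn_class_def by blast
  show ?thesis using cc_comb[OF \<open>q \<in> conn_class k p\<close> r(2)] r(1) by simp
qed

lemma cc_eq: "p \<in> Mpos k \<Longrightarrow> q \<in> conn_class k p \<Longrightarrow> conn_class k q = conn_class k p"
  using cc_trans cc_sym cc_Mpos by blast

lemma comb_layers: "q \<in> Mpos k \<Longrightarrow> i < 3 \<Longrightarrow> j < 3 \<Longrightarrow> i \<noteq> j \<Longrightarrow> distinct cs \<Longrightarrow>
  comb_pos k (map (\<lambda>c. (i,j,c)) cs) q = (if q (rem i j) \<in> set cs then psi k i j q else q)"
proof (induction cs)
  case Nil then show ?case by simp
next
  case (Cons c cs)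
  let ?q' = "comb_pos k (map (\<lambda>c. (i,j,c)) cs) q"
  have r: "?q' (rem i j) = q (rem i j)" using Cons psi_rem[of i j k q] by auto
  show ?case
  proof (cases "q (rem i j) = c")
    case True
    then have "q (rem i j) \<notin> set cs" using Cons by auto
    then show ?thesis using Cons True r by (simp add: move_pos_eq)
  next
    case False
    then show ?thesis using Cons r by (simp add: move_pos_eq)
  qed
qed

lemma psi_class: "p \<in> Mpos k \<Longrightarrow> q \<in> conn_class k p \<Longrightarrow> i < 3 \<Longrightarrow> j < 3 \<Longrightarrow> i \<noteq> j \<Longrightarrow>
  psi k i j q \<in> conn_class k p"
proof -
  assume p: "p \<in> Mpos k" and q: "q \<in> conn_class k p" and ij: "i < 3" "j < 3" "i \<noteq> j"
  have qM: "q \<in> Mpos k" using cc_Mpos p q by blast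
  then have "q (rem i j) < k" using rem_facts[OF ij] by (auto simp: Mpos_def)
  then have "comb_pos k (map (\<lambda>c. (i,j,c)) [0..<k]) q = psi k i j q"
    using comb_layers[OF qM ij, of "[0..<k]"] by simp
  moreover have "combination k (map (\<lambda>c. (i,j,c)) [0..<k])"
    using ij by (auto simp: combination_def valid_move_def)
  ultimately show ?thesis using cc_comb[OF q] by metis
qed

lemma move_X_ext: "external k q \<Longrightarrow> l \<in> Bset k q \<Longrightarrow> vm m \<Longrightarrow> move_X k m (q,l) = (q',l') \<Longrightarrow>
   external k q' \<and> l' \<in> Bset k q'"
proof -
  assume e: "external k q" and l: "l \<in> Bset k q" and v: "vm m" and E: "move_X k m (q,l) = (q',l')"
  obtain i j c where m: "m = (i,j,c)" by (metis prod_cases3)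
  have ij: "i < 3" "j < 3" "i \<noteq> j" using v m by (auto simp: vm_def)
  have qM: "q \<in> Mpos k" using e by (simp add: external_def)
  have q'M: "q' \<in> Mpos k" using move_pos_Mpos[OF qM v] E by (simp add: move_X_eq)
  have "l' \<in> Bset k q'"
  proof (cases "q (rem i j) = c")
    case True
    then have q': "q' = psi k i j q" and l': "l' = transpose i j l" using E m by (auto simp: move_X_eq move_pos_eq)
    have "q j < k" using qM ij by (auto simp: Mpos_def)
    then show ?thesis using l ij unfolding q' l' by (auto simp: Bset_def psi_def transpose_def)
  next
    case False
    then show ?thesis using E m l by (auto simp: move_X_eq move_pos_eq)
  qed
  then show ?thesis using q'M by (auto simp: external_def)
qed

lemma comb_X_ext: "external k q \<Longrightarrow> l \<in> Bset k q \<Longrightarrow> \<forall>m\<in>set ms. vm m \<Longrightarrow> comb_X k ms (q,l) = (q',l') \<Longrightarrow>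
   external k q' \<and> l' \<in> Bset k q'"
proof (induction ms arbitrary: q' l')
  case Nil then show ?case by simp
next
  case (Cons m ms)
  obtain q1 l1 where E: "comb_X k ms (q,l) = (q1,l1)" by (metis surj_pair)
  then have "external k q1 \<and> l1 \<in> Bset k q1" using Cons by auto
  moreover have "move_X k m (q1,l1) = (q',l')" using Cons.prems E by simp
  ultimately show ?case using move_X_ext[of k q1 l1 m q' l'] Cons.prems by auto
qed

definition Rset :: "nat \<Rightarrow> (nat \<Rightarrow> nat) set \<Rightarrow> ((nat \<Rightarrow> nat) \<Rightarrow> (nat \<Rightarrow> nat)) set" where
  "Rset k A = {\<sigma>. (\<forall>p\<in>A. \<sigma> p \<in> A) \<and> (\<exists>ms. combination k ms \<and> (\<forall>p\<in>A. comb_pos k ms p = \<sigma> p) \<and>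
      (\<forall>q l. external k q \<and> q \<notin> A \<and> l \<in> Bset k q \<longrightarrow> comb_X k ms (q,l) = (q,l)))}"

lemma Rset_id: "id \<in> Rset k A"
  unfolding Rset_def by (auto intro!: exI[of _ "[]"] simp: combination_def)

lemma Rset_comp: "f \<in> Rset k A \<Longrightarrow> g \<in> Rset k A \<Longrightarrow> f \<circ> g \<in> Rset k A"
proof -
  assume "f \<in> Rset k A" "g \<in> Rset k A"
  then obtain ms1 ms2 where f: "\<forall>p\<in>A. f p \<in> A" "combination k ms1" "\<forall>p\<in>A. comb_pos k ms1 p = f p"
     "\<forall>q l. external k q \<and> q \<notin> A \<and> l \<in> Bset k q \<longrightarrow> comb_X k ms1 (q,l) = (q,l)"
     and g: "\<forall>p\<in>A. g p \<in> A" "combination k ms2" "\<forall>p\<in>A. comb_pos k ms2 p = g p"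
     "\<forall>q l. external k q \<and> q \<notin> A \<and> l \<in> Bset k q \<longrightarrow> comb_X k ms2 (q,l) = (q,l)"
    unfolding Rset_def by blast
  show ?thesis unfolding Rset_def
    apply (rule CollectI, rule conjI)
    using f g apply simp
    apply (rule exI[of _ "ms1 @ ms2"])
    using f g by (simp add: combination_append comb_pos_append comb_X_append)
qed

lemma Rset_conj:
  assumes p0: "p0 \<in> Mpos k" and A: "A = conn_class k p0"
  and xyz: "x \<in> A" "y \<in> A" "z \<in> A" "distinct [x,y,z]"
  and c: "cyc3 x y z \<in> Rset k A"
  and g: "combination k g"
  shows "cyc3 (comb_pos k g x) (comb_pos k g y) (comb_pos k g z) \<in> Rset k A"
proof -
  let ?G = "comb_pos k g" and ?Gi = "comb_pos k (invl g)"
  have gv: "\<forall>m\<in>set g. vm m" using g combination_vm by blast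
  have AM: "\<And>p. p \<in> A \<Longrightarrow> p \<in> Mpos k" using A cc_Mpos p0 by blast
  have GA: "\<And>p. p \<in> A \<Longrightarrow> ?G p \<in> A" using A cc_comb g by blast
  have GiA: "\<And>p. p \<in> A \<Longrightarrow> ?Gi p \<in> A" using A cc_comb g combination_invl by blast
  have inj: "\<And>p q. p \<in> Mpos k \<Longrightarrow> q \<in> Mpos k \<Longrightarrow> ?G p = ?G q \<Longrightarrow> p = q"
    using inv_left gv by metis
  obtain ms where c1: "combination k ms" "\<forall>p\<in>A. comb_pos k ms p = cyc3 x y z p"
     "\<forall>q l. external k q \<and> q \<notin> A \<and> l \<in> Bset k q \<longrightarrow> comb_X k ms (q,l) = (q,l)"
    using c unfolding Rset_def by blast
  let ?x = "?G x" and ?y = "?G y" and ?z = "?G z"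
  have d': "distinct [?x,?y,?z]" using xyz inj AM by auto
  have key: "?G (cyc3 x y z w) = cyc3 ?x ?y ?z (?G w)" if "w \<in> A" for w
  proof -
    have "?G w \<noteq> ?x" if "w \<noteq> x" using inj AM \<open>w \<in> A\<close> xyz that by blast
    moreover have "?G w \<noteq> ?y" if "w \<noteq> y" using inj AM \<open>w \<in> A\<close> xyz that by blast
    moreover have "?G w \<noteq> ?z" if "w \<noteq> z" using inj AM \<open>w \<in> A\<close> xyz that by blast
    ultimately show ?thesis using xyz d' by (auto simp: cyc3_app)
  qed
  show ?thesis unfolding Rset_def
  proof (rule CollectI, rule conjI)
    show "\<forall>p\<in>A. cyc3 ?x ?y ?z p \<in> A" using xyz d' GA by (auto simp: cyc3_app)
    show "\<exists>ms. combination k ms \<and> (\<forall>p\<in>A. comb_pos k ms p = cyc3 ?x ?y ?z p) \<and>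
      (\<forall>q l. external k q \<and> q \<notin> A \<and> l \<in> Bset k q \<longrightarrow> comb_X k ms (q,l) = (q,l))"
    proof (rule exI[of _ "g @ ms @ invl g"], intro conjI allI impI ballI)
      show "combination k (g @ ms @ invl g)" using g c1 combination_invl combination_append by blast
    next
      fix p assume pA: "p \<in> A"
      have w: "?Gi p \<in> A" using GiA pA by blast
      have "comb_pos k (g @ ms @ invl g) p = ?G (cyc3 x y z (?Gi p))"
        using c1 w by (simp add: comb_pos_append)
      also have "\<dots> = cyc3 ?x ?y ?z (?G (?Gi p))" using key w by blast
      also have "?G (?Gi p) = p" using inv_right AM pA gv by blast
      finally show "comb_pos k (g @ ms @ invl g) p = cyc3 ?x ?y ?z p" .
    next
      fix q l assume H: "external k q \<and> q \<notin> A \<and> l \<in> Bset k q"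
      have qM: "q \<in> Mpos k" using H by (simp add: external_def)
      obtain q1 l1 where E: "comb_X k (invl g) (q,l) = (q1,l1)" by (metis surj_pair)
      have e1: "external k q1 \<and> l1 \<in> Bset k q1" using comb_X_ext[OF _ _ _ E] H gv invl_set by metis
      have q1: "q1 = ?Gi q" using comb_X_fst[of k "invl g" q l] E by simp
      have "q1 \<notin> A"
      proof
        assume "q1 \<in> A"
        then have "?G q1 \<in> A" using GA by blast
        moreover have "?G q1 = q" using q1 inv_right qM gv by blast
        ultimately show False using H by blast
      qed
      then have "comb_X k ms (q1,l1) = (q1,l1)" using c1 e1 by blast
      then have "comb_X k (g @ ms @ invl g) (q,l) = comb_X k g (comb_X k (invl g) (q,l))"
        using E by (simp add: comb_X_append)
      also have "\<dots> = (q,l)" using invX_right qM gv by blast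
      finally show "comb_X k (g @ ms @ invl g) (q,l) = (q,l)" .
    qed
  qed
qed


datatype sv = sZ | sK | sA | sFA | sB | sFB | sM | sW | sFW

fun fs :: "sv \<Rightarrow> sv" where
  "fs sZ = sK" | "fs sK = sZ" | "fs sA = sFA" | "fs sFA = sA" | "fs sB = sFB" | "fs sFB = sB"
| "fs sM = sM" | "fs sW = sFW" | "fs sFW = sW"

definition alpha :: "nat \<Rightarrow> nat \<Rightarrow> nat \<Rightarrow> nat \<Rightarrow> sv" where
  "alpha k a b x = (if x = 0 then sZ else if x = k - 1 then sK else if x = a then sA
     else if x = k - 1 - a then sFA else if x = b then sB else if x = k - 1 - b then sFB
     else if 2 * x = k - 1 then sM else if 2 * x < k - 1 then sW else sFW)"

fun gam :: "nat \<Rightarrow> nat \<Rightarrow> nat \<Rightarrow> sv \<Rightarrow> nat" where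
  "gam k a b sZ = 0" | "gam k a b sK = k - 1" | "gam k a b sA = a" | "gam k a b sFA = k - 1 - a"
| "gam k a b sB = b" | "gam k a b sFB = k - 1 - b" | "gam k a b sM = (k - 1) div 2"
| "gam k a b sW = 0" | "gam k a b sFW = 0"

definition tagl :: "sv list \<Rightarrow> (nat \<times> sv) list" where
  "tagl s = [(0, s ! 0), (1, s ! 1), (2, s ! 2)]"

definition alist :: "nat \<Rightarrow> nat \<Rightarrow> nat \<Rightarrow> (nat \<Rightarrow> nat) \<Rightarrow> sv list" where
  "alist k a b q = [alpha k a b (q 0), alpha k a b (q 1), alpha k a b (q 2)]"

fun smove :: "nat \<times> nat \<times> sv \<Rightarrow> (nat \<times> sv) list \<Rightarrow> (nat \<times> sv) list" where
  "smove (i,j,c) t = (if snd (t ! rem i j) = c then t[i := (fst (t ! j), fs (snd (t ! j))), j := t ! i] else t)"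

definition scomb :: "(nat \<times> nat \<times> sv) list \<Rightarrow> (nat \<times> sv) list \<Rightarrow> (nat \<times> sv) list" where
  "scomb ms t = foldr smove ms t"

definition cm :: "nat \<Rightarrow> nat \<Rightarrow> nat \<Rightarrow> (nat \<times> nat \<times> sv) list \<Rightarrow> (nat \<times> nat \<times> nat) list" where
  "cm k a b ms = map (\<lambda>(i,j,c). (i,j,gam k a b c)) ms"

definition posof :: "nat \<Rightarrow> nat \<Rightarrow> nat \<Rightarrow> sv list \<Rightarrow> (nat \<Rightarrow> nat)" where
  "posof k a b s = (\<lambda>i. if i < 3 then gam k a b (s ! i) else 0)"

fun svm :: "sv list \<Rightarrow> nat \<times> nat \<times> sv \<Rightarrow> bool" where
  "svm Lay (i,j,c) = (i < 3 \<and> j < 3 \<and> i \<noteq> j \<and> c \<in> set Lay)"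

definition good :: "nat \<Rightarrow> nat \<Rightarrow> nat \<Rightarrow> sv list \<Rightarrow> bool" where
  "good k a b Lay \<longleftrightarrow> (\<forall>x<k. alpha k a b (k - 1 - x) = fs (alpha k a b x)) \<and>
     (\<forall>x<k. alpha k a b (k - 1 - x) = alpha k a b x \<longrightarrow> k - 1 - x = x) \<and>
     (\<forall>c\<in>set Lay. \<forall>x<k. alpha k a b x = c \<longleftrightarrow> x = gam k a b c) \<and>
     (\<forall>c\<in>set Lay. gam k a b c < k)"

definition Inv :: "nat \<Rightarrow> nat \<Rightarrow> nat \<Rightarrow> (nat \<Rightarrow> nat) \<Rightarrow> nat \<Rightarrow> (nat \<Rightarrow> nat) \<Rightarrow> nat \<Rightarrow> (nat \<times> sv) list \<Rightarrow> bool" where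
  "Inv k a b q l q' l' t \<longleftrightarrow> q' \<in> Mpos k \<and> l' < 3 \<and> length t = 3 \<and> fst (t ! l') = l \<and>
     (\<forall>n<3. fst (t ! n) < 3 \<and> (q' n = q (fst (t ! n)) \<or> q' n = k - 1 - q (fst (t ! n))) \<and>
        snd (t ! n) = alpha k a b (q' n))"

lemma lt3: "(n::nat) < 3 \<longleftrightarrow> n = 0 \<or> n = 1 \<or> n = 2"
  by auto

lemma all3: "(\<forall>n<(3::nat). P n) \<longleftrightarrow> P 0 \<and> P 1 \<and> P 2"
  unfolding lt3 by auto

lemma cm_Cons: "cm k a b ((i,j,c) # ms) = (i,j,gam k a b c) # cm k a b ms"
  by (simp add: cm_def)

lemma scomb_Cons: "scomb (m # ms) t = smove m (scomb ms t)"
  by (simp add: scomb_def)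

lemma Inv_step:
  assumes g: "good k a b Lay" and q: "q \<in> Mpos k" and I: "Inv k a b q l q' l' t"
  and m: "svm Lay (i,j,c)"
  and E: "move_X k (i,j,gam k a b c) (q',l') = (q'',l'')"
  shows "Inv k a b q l q'' l'' (smove (i,j,c) t)"
proof -
  have ij: "i < 3" "j < 3" "i \<noteq> j" and cL: "c \<in> set Lay" using m by auto
  have r: "rem i j < 3" using rem_facts[OF ij] by simp
  have q'M: "q' \<in> Mpos k" using I by (simp add: Inv_def)
  have qlt: "\<And>n. n < 3 \<Longrightarrow> q n < k" using q by (simp add: Mpos_def)
  have q'lt: "\<And>n. n < 3 \<Longrightarrow> q' n < k" using q'M by (simp add: Mpos_def)
  have G1: "\<And>x. x < k \<Longrightarrow> alpha k a b (k - 1 - x) = fs (alpha k a b x)" using g by (simp add: good_def)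
  have G3: "\<And>x. x < k \<Longrightarrow> alpha k a b x = c \<longleftrightarrow> x = gam k a b c" using g cL by (simp add: good_def)
  have test: "q' (rem i j) = gam k a b c \<longleftrightarrow> snd (t ! rem i j) = c"
    using I r G3[OF q'lt[OF r]] by (auto simp: Inv_def)
  show ?thesis
  proof (cases "q' (rem i j) = gam k a b c")
    case False
    then have "q'' = q'" "l'' = l'" using E by (auto simp: move_X_eq move_pos_eq)
    moreover have "smove (i,j,c) t = t" using False test by simp
    ultimately show ?thesis using I by simp
  next
    case True
    then have q'': "q'' = psi k i j q'" and l'': "l'' = transpose i j l'" using E by (auto simp: move_X_eq move_pos_eq)
    have st: "smove (i,j,c) t = t[i := (fst (t ! j), fs (snd (t ! j))), j := t ! i]" using True test by simp
    have lt: "length t = 3" using I by (simp add: Inv_def)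
    have Ij: "fst (t ! j) < 3 \<and> (q' j = q (fst (t ! j)) \<or> q' j = k - 1 - q (fst (t ! j))) \<and> snd (t ! j) = alpha k a b (q' j)"
      using I ij by (simp add: Inv_def)
    have Ii: "fst (t ! i) < 3 \<and> (q' i = q (fst (t ! i)) \<or> q' i = k - 1 - q (fst (t ! i))) \<and> snd (t ! i) = alpha k a b (q' i)"
      using I ij by (simp add: Inv_def)
    have newi: "k - 1 - q' j = q (fst (t ! j)) \<or> k - 1 - q' j = k - 1 - q (fst (t ! j))"
      using Ij qlt[of "fst (t ! j)"] by auto
    have ai: "fs (alpha k a b (q' j)) = alpha k a b (k - 1 - q' j)" using G1 q'lt ij by simp
    have M: "q'' \<in> Mpos k" using q'' psi_Mpos q'M ij by simp
    have L: "l'' < 3" using I ij l'' by (auto simp: Inv_def transpose_def)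
    have F: "fst (smove (i,j,c) t ! l'') = l"
      using I ij lt unfolding st l'' by (auto simp: Inv_def transpose_def nth_list_update)
    have N: "\<forall>n<3. fst (smove (i,j,c) t ! n) < 3 \<and> (q'' n = q (fst (smove (i,j,c) t ! n)) \<or> q'' n = k - 1 - q (fst (smove (i,j,c) t ! n))) \<and>
        snd (smove (i,j,c) t ! n) = alpha k a b (q'' n)"
    proof (intro allI impI)
      fix n :: nat assume n: "n < 3"
      show "fst (smove (i,j,c) t ! n) < 3 \<and> (q'' n = q (fst (smove (i,j,c) t ! n)) \<or> q'' n = k - 1 - q (fst (smove (i,j,c) t ! n))) \<and>
        snd (smove (i,j,c) t ! n) = alpha k a b (q'' n)"
      proof (cases "n = j")
        case True
        then show ?thesis using Ii lt ij unfolding st q'' by (simp add: psi_def nth_list_update)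
      next
        case nj: False
        show ?thesis
        proof (cases "n = i")
          case True
          then show ?thesis using Ij newi ai lt ij nj unfolding st q'' by (auto simp: psi_def nth_list_update)
        next
          case False
          then show ?thesis using I n nj lt unfolding st q'' by (simp add: psi_def nth_list_update Inv_def)
        qed
      qed
    qed
    show ?thesis unfolding Inv_def using M L F N lt st by simp
  qed
qed

lemma Inv_comb:
  assumes g: "good k a b Lay" and q: "q \<in> Mpos k" and l: "l < 3"
  and ms: "\<forall>m\<in>set ms. svm Lay m"
  shows "Inv k a b q l (comb_pos k (cm k a b ms) q) (snd (comb_X k (cm k a b ms) (q,l))) (scomb ms (tagl (alist k a b q)))"
  using ms
proof (induction ms)
  case Nil
  have t: "scomb [] (tagl (alist k a b q)) = [(0, alpha k a b (q 0)), (1, alpha k a b (q 1)), (2, alpha k a b (q 2))]"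
    by (simp add: scomb_def tagl_def alist_def)
  have "l = 0 \<or> l = 1 \<or> l = 2" using l by auto
  then show ?case using q l unfolding Inv_def t all3 by (auto simp: cm_def)
next
  case (Cons m ms)
  obtain i j c where m: "m = (i,j,c)" by (metis prod_cases3)
  obtain q' l' where E: "comb_X k (cm k a b ms) (q,l) = (q',l')" by (metis surj_pair)
  have q': "q' = comb_pos k (cm k a b ms) q" using comb_X_fst[of k "cm k a b ms" q l] E by simp
  obtain q'' l'' where E2: "move_X k (i,j,gam k a b c) (q',l') = (q'',l'')" by (metis surj_pair)
  have q'': "q'' = comb_pos k (cm k a b (m # ms)) q"
    using arg_cong[OF E2, of fst] q' m by (simp add: move_X_fst cm_Cons)
  have l'': "l'' = snd (comb_X k (cm k a b (m # ms)) (q,l))" using E E2 m by (simp add: cm_Cons)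
  have "Inv k a b q l q' l' (scomb ms (tagl (alist k a b q)))" using Cons E q' by simp
  then have "Inv k a b q l q'' l'' (smove (i,j,c) (scomb ms (tagl (alist k a b q))))"
    using Inv_step[OF g q _ _ E2] Cons.prems m by simp
  then show ?case using q'' l'' m by (simp add: scomb_Cons)
qed


lemma tagl_nth: "n < 3 \<Longrightarrow> tagl s ! n = (n, s ! n)"
  unfolding lt3 by (auto simp: tagl_def)

lemma alist_nth: "n < 3 \<Longrightarrow> alist k a b q ! n = alpha k a b (q n)"
  unfolding lt3 by (auto simp: alist_def)

lemma length_alist[simp]: "length (alist k a b q) = 3"
  by (simp add: alist_def)

lemma good_G1: "good k a b Lay \<Longrightarrow> x < k \<Longrightarrow> alpha k a b (k - 1 - x) = fs (alpha k a b x)"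
  by (simp add: good_def)
lemma good_G2: "good k a b Lay \<Longrightarrow> x < k \<Longrightarrow> alpha k a b (k - 1 - x) = alpha k a b x \<Longrightarrow> k - 1 - x = x"
  by (simp add: good_def)
lemma good_G3: "good k a b Lay \<Longrightarrow> c \<in> set Lay \<Longrightarrow> x < k \<Longrightarrow> alpha k a b x = c \<longleftrightarrow> x = gam k a b c"
  by (simp add: good_def)
lemma good_G4: "good k a b Lay \<Longrightarrow> c \<in> set Lay \<Longrightarrow> gam k a b c < k"
  by (simp add: good_def)

lemma sim_fix:
  assumes g: "good k a b Lay" and q: "q \<in> Mpos k" and l: "l < 3"
  and ms: "\<forall>m\<in>set ms. svm Lay m"
  and fx: "scomb ms (tagl (alist k a b q)) = tagl (alist k a b q)"
  shows "comb_X k (cm k a b ms) (q,l) = (q,l)"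
proof -
  let ?q' = "comb_pos k (cm k a b ms) q" and ?l' = "snd (comb_X k (cm k a b ms) (q,l))"
  have I: "Inv k a b q l ?q' ?l' (tagl (alist k a b q))" using Inv_comb[OF g q l ms] fx by simp
  have l'3: "?l' < 3" and fl: "fst (tagl (alist k a b q) ! ?l') = l" using I by (auto simp: Inv_def)
  have l': "?l' = l" using fl tagl_nth[OF l'3] by simp
  have qq: "?q' = q"
  proof
    fix n
    show "?q' n = q n"
    proof (cases "n < 3")
      case True
      have qn: "q n < k" using q True by (simp add: Mpos_def)
      have H: "?q' n = q n \<or> ?q' n = k - 1 - q n" "alpha k a b (?q' n) = alpha k a b (q n)"
        using I True by (auto simp: Inv_def tagl_nth alist_nth)
      then show ?thesis using good_G2[OF g qn] by auto
    next
      case False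
      then show ?thesis using I q by (simp add: Inv_def Mpos_def)
    qed
  qed
  show ?thesis using comb_X_fst[of k "cm k a b ms" q l] l' qq by (metis prod.collapse)
qed

lemma sim_pos:
  assumes g: "good k a b Lay" and q: "q \<in> Mpos k"
  and ms: "\<forall>m\<in>set ms. svm Lay m"
  and s: "map snd (scomb ms (tagl (alist k a b q))) = s" "set s \<subseteq> set Lay"
  shows "comb_pos k (cm k a b ms) q = posof k a b s"
proof -
  let ?q' = "comb_pos k (cm k a b ms) q" and ?t = "scomb ms (tagl (alist k a b q))"
  have I: "Inv k a b q 0 ?q' (snd (comb_X k (cm k a b ms) (q,0))) ?t" using Inv_comb[OF g q _ ms] by simp
  show ?thesis
  proof
    fix n
    show "?q' n = posof k a b s n"
    proof (cases "n < 3")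
      case True
      have lt: "length ?t = 3" using I by (simp add: Inv_def)
      have sn: "s ! n = snd (?t ! n)" using s(1) lt True by auto
      have "s ! n \<in> set Lay" using s lt True by (metis length_map nth_mem subsetD)
      moreover have "snd (?t ! n) = alpha k a b (?q' n)" "?q' n < k" using I True by (auto simp: Inv_def Mpos_def)
      ultimately have "?q' n = gam k a b (s ! n)" using good_G3[OF g] sn by metis
      then show ?thesis using True by (simp add: posof_def)
    next
      case False
      then show ?thesis using I by (simp add: Inv_def Mpos_def posof_def)
    qed
  qed
qed

lemma posof_Mpos: "good k a b Lay \<Longrightarrow> length s = 3 \<Longrightarrow> set s \<subseteq> set Lay \<Longrightarrow> posof k a b s \<in> Mpos k"
  unfolding Mpos_def posof_def using good_G4 by (auto simp: nth_mem subsetD)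

lemma alist_posof: "good k a b Lay \<Longrightarrow> length s = 3 \<Longrightarrow> set s \<subseteq> set Lay \<Longrightarrow> alist k a b (posof k a b s) = s"
proof -
  assume g: "good k a b Lay" and l: "length s = 3" and s: "set s \<subseteq> set Lay"
  have "alpha k a b (gam k a b (s ! n)) = s ! n" if "n < 3" for n
  proof -
    have c: "s ! n \<in> set Lay" using s l that by (metis nth_mem subsetD)
    show ?thesis using good_G3[OF g c good_G4[OF g c]] by simp
  qed
  then show ?thesis using l by (intro nth_equalityI) (auto simp: alist_nth posof_def)
qed

lemma alist_inj: "good k a b Lay \<Longrightarrow> q \<in> Mpos k \<Longrightarrow> set (alist k a b q) \<subseteq> set Lay \<Longrightarrow> q = posof k a b (alist k a b q)"
proof -
  assume g: "good k a b Lay" and q: "q \<in> Mpos k" and s: "set (alist k a b q) \<subseteq> set Lay"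
  show ?thesis
  proof
    fix n show "q n = posof k a b (alist k a b q) n"
    proof (cases "n < 3")
      case True
      have c: "alpha k a b (q n) \<in> set Lay" using s True alist_nth[OF True, of k a b q]
        by (metis length_alist nth_mem subsetD)
      have "q n < k" using q True by (simp add: Mpos_def)
      then have "q n = gam k a b (alpha k a b (q n))" using good_G3[OF g c] by blast
      then show ?thesis using True by (simp add: posof_def alist_nth)
    next
      case False then show ?thesis using q by (simp add: Mpos_def posof_def)
    qed
  qed
qed

definition spsi :: "nat \<Rightarrow> nat \<Rightarrow> sv list \<Rightarrow> sv list" where
  "spsi i j s = s[i := fs (s ! j), j := s ! i]"

lemma alist_psi: "good k a b Lay \<Longrightarrow> q \<in> Mpos k \<Longrightarrow> i < 3 \<Longrightarrow> j < 3 \<Longrightarrow> i \<noteq> j \<Longrightarrow>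
  alist k a b (psi k i j q) = spsi i j (alist k a b q)"
proof -
  assume g: "good k a b Lay" and q: "q \<in> Mpos k" and ij: "i < 3" "j < 3" "i \<noteq> j"
  have qj: "q j < k" using q ij by (simp add: Mpos_def)
  show ?thesis
  proof (rule nth_equalityI)
    show "length (alist k a b (psi k i j q)) = length (spsi i j (alist k a b q))" by (simp add: spsi_def)
  next
    fix n assume "n < length (alist k a b (psi k i j q))"
    then have n: "n < 3" by simp
    show "alist k a b (psi k i j q) ! n = spsi i j (alist k a b q) ! n"
      using n ij good_G1[OF g qj] by (auto simp: alist_nth spsi_def psi_def nth_list_update)
  qed
qed

definition srot :: "(nat \<times> nat) list \<Rightarrow> sv list \<Rightarrow> sv list" where
  "srot w s = foldr (\<lambda>(i,j) s. spsi i j s) w s"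

definition crot :: "nat \<Rightarrow> (nat \<times> nat) list \<Rightarrow> (nat \<Rightarrow> nat) \<Rightarrow> (nat \<Rightarrow> nat)" where
  "crot k w q = foldr (\<lambda>(i,j) q. psi k i j q) w q"

fun vpair :: "nat \<times> nat \<Rightarrow> bool" where
  "vpair (i,j) = (i < 3 \<and> j < 3 \<and> i \<noteq> j)"

lemma crot_props: "good k a b Lay \<Longrightarrow> p0 \<in> Mpos k \<Longrightarrow> q \<in> conn_class k p0 \<Longrightarrow> \<forall>x\<in>set w. vpair x \<Longrightarrow>
   crot k w q \<in> conn_class k p0 \<and> alist k a b (crot k w q) = srot w (alist k a b q)"
proof (induction w)
  case Nil then show ?case by (simp add: crot_def srot_def)
next
  case (Cons x w)
  obtain i j where x: "x = (i,j)" by fastforce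
  have ij: "i < 3" "j < 3" "i \<noteq> j" using Cons.prems x by auto
  have IH: "crot k w q \<in> conn_class k p0" "alist k a b (crot k w q) = srot w (alist k a b q)" using Cons by auto
  have M: "crot k w q \<in> Mpos k" using IH cc_Mpos Cons.prems by blast
  show ?case using psi_class[OF Cons.prems(2) IH(1) ij] alist_psi[OF Cons.prems(1) M ij] IH x
    by (simp add: crot_def srot_def)
qed

fun isext :: "sv list \<Rightarrow> bool" where
  "isext s = (sZ \<in> set s \<or> sK \<in> set s)"

definition trips :: "sv list \<Rightarrow> sv list list" where
  "trips syms = [[x,y,z]. x \<leftarrow> syms, y \<leftarrow> syms, z \<leftarrow> syms]"

lemma alpha_0: "alpha k a b 0 = sZ" by (simp add: alpha_def)
lemma alpha_K: "k \<ge> 2 \<Longrightarrow> alpha k a b (k - 1) = sK" by (simp add: alpha_def)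

lemma alist_ext: "k \<ge> 2 \<Longrightarrow> external k q \<Longrightarrow> \<forall>x<k. alpha k a b x \<in> set syms \<Longrightarrow>
   alist k a b q \<in> set (trips syms) \<and> isext (alist k a b q)"
proof -
  assume k: "k \<ge> 2" and e: "external k q" and r: "\<forall>x<k. alpha k a b x \<in> set syms"
  have qM: "\<And>n. n < 3 \<Longrightarrow> q n < k" using e by (simp add: external_def Mpos_def)
  obtain n where n: "n < 3" "q n = 0 \<or> q n = k - 1" using e by (auto simp: external_def Bset_def)
  have "alist k a b q ! n \<in> {sZ, sK}" using n alpha_0 alpha_K[OF k] alist_nth by auto
  moreover have "alist k a b q ! n \<in> set (alist k a b q)" using n by (simp add: nth_mem)
  ultimately have "isext (alist k a b q)" by auto
  moreover have "alist k a b q \<in> set (trips syms)"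
  proof -
    have "alpha k a b (q 0) \<in> set syms" "alpha k a b (q 1) \<in> set syms" "alpha k a b (q 2) \<in> set syms"
      using r qM[of 0] qM[of 1] qM[of 2] by auto
    then show ?thesis by (auto simp: alist_def trips_def)
  qed
  ultimately show ?thesis by simp
qed


lemma class_shape:
  assumes g: "good k a b Lay" and a0M: "a0 \<in> Mpos k" and a0s: "alist k a b a0 \<in> set shapeL"
  and cl: "\<forall>s\<in>set shapeL. \<forall>i<3. \<forall>j<3. i \<noteq> j \<longrightarrow> spsi i j s \<in> set shapeL"
  and x: "x \<in> conn_class k a0"
  shows "alist k a b x \<in> set shapeL"
proof -
  obtain ms where x: "x = comb_pos k ms a0" and c: "combination k ms" using x unfolding conn_class_def by blast
  have "\<forall>m\<in>set ms. vm m" using c combination_vm by blast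
  then have "alist k a b (comb_pos k ms a0) \<in> set shapeL"
  proof (induction ms)
    case Nil then show ?case using a0s by simp
  next
    case (Cons m ms)
    obtain i j c where m: "m = (i,j,c)" by (metis prod_cases3)
    have ij: "i < 3" "j < 3" "i \<noteq> j" using Cons.prems m by (auto simp: vm_def)
    let ?y = "comb_pos k ms a0"
    have yM: "?y \<in> Mpos k" using comb_pos_Mpos a0M Cons.prems by auto
    have ys: "alist k a b ?y \<in> set shapeL" using Cons by auto
    show ?case using ys cl ij alist_psi[OF g yM ij] m by (simp add: move_pos_eq)
  qed
  then show ?thesis using x by simp
qed

definition ext_trips :: "sv list \<Rightarrow> sv list list" where
  "ext_trips syms = filter isext (trips syms)"

theorem type_thm:
  fixes base :: "(nat \<times> nat \<times> sv) list" and gw :: "sv list \<Rightarrow> (nat \<times> nat \<times> sv) list"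
  assumes k2: "k \<ge> 2" and g: "good k a b Lay"
  and rng: "\<forall>x<k. alpha k a b x \<in> set syms"
  and vb: "\<forall>m\<in>set base. svm Lay m"
  and vg: "\<forall>s\<in>set shapeL. \<forall>m\<in>set (gw s). svm Lay m"
  and sh: "\<forall>s\<in>set shapeL. length s = 3 \<and> set s \<subseteq> set Lay \<and> s \<in> set (ext_trips syms)"
  and mem: "A0 \<in> set shapeL" "A1 \<in> set shapeL" "X0 \<in> set shapeL" "distinct [A0, A1, X0]"
  and bf: "\<forall>t\<in>set (ext_trips syms). t \<notin> {A0, A1, X0} \<longrightarrow> scomb base (tagl t) = tagl t"
  and bc: "map snd (scomb base (tagl A0)) = A1" "map snd (scomb base (tagl A1)) = X0"
          "map snd (scomb base (tagl X0)) = A0"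
  and gc: "\<forall>s\<in>set shapeL. s \<notin> {A0, A1} \<longrightarrow> map snd (scomb (gw s) (tagl A0)) = A0 \<and>
             map snd (scomb (gw s) (tagl A1)) = A1 \<and> map snd (scomb (gw s) (tagl X0)) = s"
  and cl: "\<forall>s\<in>set shapeL. \<forall>i<3. \<forall>j<3. i \<noteq> j \<longrightarrow> spsi i j s \<in> set shapeL"
  and rot: "\<forall>t\<in>set reachL. \<exists>w\<in>set rotws. srot w t = A0"
  and rotv: "\<forall>w\<in>set rotws. \<forall>x\<in>set w. vpair x"
  and p0: "external k p0" "alist k a b p0 \<in> set reachL"
  and pi: "\<pi> permutes conn_class k p0" "evenperm \<pi>"
  shows "\<pi> \<in> Rset k (conn_class k p0)"
proof -
  let ?A = "conn_class k p0"
  let ?P = "posof k a b"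
  have p0M: "p0 \<in> Mpos k" using p0 by (simp add: external_def)
  have shL: "\<And>s. s \<in> set shapeL \<Longrightarrow> length s = 3 \<and> set s \<subseteq> set Lay" using sh by blast
  have AM: "\<And>x. x \<in> ?A \<Longrightarrow> x \<in> Mpos k" using cc_Mpos p0M by blast
  obtain w where w: "w \<in> set rotws" "srot w (alist k a b p0) = A0" using rot p0 by blast
  have cr: "crot k w p0 \<in> ?A" "alist k a b (crot k w p0) = A0"
    using crot_props[OF g p0M cc_self, of w] rotv w by auto
  have a0: "?P A0 \<in> ?A" using cr alist_inj[OF g AM[OF cr(1)]] shL[OF mem(1)] by metis
  have a0M: "?P A0 \<in> Mpos k" using AM a0 by blast
  have Aeq: "?A = conn_class k (?P A0)" using cc_eq[OF p0M a0] by simp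
  have alP: "\<And>s. s \<in> set shapeL \<Longrightarrow> alist k a b (?P s) = s" using alist_posof[OF g] shL by blast
  have inA: "\<And>x. x \<in> ?A \<Longrightarrow> alist k a b x \<in> set shapeL"
    using class_shape[OF g a0M _ cl] alP[OF mem(1)] mem(1) Aeq by auto
  have xP: "\<And>x. x \<in> ?A \<Longrightarrow> x = ?P (alist k a b x)"
    using alist_inj[OF g] AM inA shL by blast
  have combb: "combination k (cm k a b base)"
    using vb good_G4[OF g] by (auto simp: combination_def cm_def valid_move_def)
  have bp: "comb_pos k (cm k a b base) (?P A0) = ?P A1" "comb_pos k (cm k a b base) (?P A1) = ?P X0"
     "comb_pos k (cm k a b base) (?P X0) = ?P A0"
    using sim_pos[OF g posof_Mpos[OF g] vb] bc alP mem shL by auto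
  have a1: "?P A1 \<in> ?A" and x0: "?P X0 \<in> ?A" using bp cc_comb[OF _ combb] a0 by metis+
  have dist: "distinct [?P A0, ?P A1, ?P X0]" using mem alP by (metis distinct_length_2_or_more distinct_singleton)
  have base_R: "cyc3 (?P A0) (?P A1) (?P X0) \<in> Rset k ?A"
    unfolding Rset_def
  proof (rule CollectI, rule conjI)
    show "\<forall>p\<in>?A. cyc3 (?P A0) (?P A1) (?P X0) p \<in> ?A" using dist a0 a1 x0 by (simp add: cyc3_app)
    show "\<exists>ms. combination k ms \<and> (\<forall>p\<in>?A. comb_pos k ms p = cyc3 (?P A0) (?P A1) (?P X0) p) \<and>
      (\<forall>q l. external k q \<and> q \<notin> ?A \<and> l \<in> Bset k q \<longrightarrow> comb_X k ms (q,l) = (q,l))"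
    proof (rule exI[of _ "cm k a b base"], intro conjI allI impI ballI)
      show "combination k (cm k a b base)" by (rule combb)
    next
      fix p assume pA: "p \<in> ?A"
      show "comb_pos k (cm k a b base) p = cyc3 (?P A0) (?P A1) (?P X0) p"
      proof (cases "p \<in> {?P A0, ?P A1, ?P X0}")
        case True then show ?thesis using bp dist by (auto simp: cyc3_app)
      next
        case False
        have s: "alist k a b p \<in> set shapeL" using inA pA by blast
        have "alist k a b p \<notin> {A0, A1, X0}" using False xP[OF pA] by auto
        then have "scomb base (tagl (alist k a b p)) = tagl (alist k a b p)" using bf sh s by blast
        then have "comb_X k (cm k a b base) (p,0) = (p,0)" using sim_fix[OF g AM[OF pA] _ vb] by simp
        then show ?thesis using False comb_X_fst[of k "cm k a b base" p 0] dist by (auto simp: cyc3_app)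
      qed
    next
      fix q l assume H: "external k q \<and> q \<notin> ?A \<and> l \<in> Bset k q"
      have qM: "q \<in> Mpos k" using H by (simp add: external_def)
      have l3: "l < 3" using H by (simp add: Bset_def)
      have e: "alist k a b q \<in> set (ext_trips syms)" using alist_ext[OF k2 _ rng] H by (simp add: ext_trips_def)
      have "alist k a b q \<notin> {A0, A1, X0}"
      proof
        assume "alist k a b q \<in> {A0, A1, X0}"
        then have "q \<in> {?P A0, ?P A1, ?P X0}" using alist_inj[OF g qM] shL mem by auto
        then show False using H a0 a1 x0 by auto
      qed
      then have "scomb base (tagl (alist k a b q)) = tagl (alist k a b q)" using bf e by blast
      then show "comb_X k (cm k a b base) (q,l) = (q,l)" using sim_fix[OF g qM l3 vb] by simp
    qed
  qed
  have cyc_all: "cyc3 (?P A0) (?P A1) x \<in> Rset k ?A" if x: "x \<in> ?A" "x \<noteq> ?P A0" "x \<noteq> ?P A1" for x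
  proof -
    let ?s = "alist k a b x"
    have s: "?s \<in> set shapeL" using inA x by blast
    have sn: "?s \<notin> {A0, A1}" using x xP by auto
    have G: "map snd (scomb (gw ?s) (tagl A0)) = A0" "map snd (scomb (gw ?s) (tagl A1)) = A1"
        "map snd (scomb (gw ?s) (tagl X0)) = ?s" using gc s sn by blast+
    have vgs: "\<forall>m\<in>set (gw ?s). svm Lay m" using vg s by blast
    have combg: "combination k (cm k a b (gw ?s))"
      using vgs good_G4[OF g] by (auto simp: combination_def cm_def valid_move_def)
    have gp: "comb_pos k (cm k a b (gw ?s)) (?P A0) = ?P A0" "comb_pos k (cm k a b (gw ?s)) (?P A1) = ?P A1"
       "comb_pos k (cm k a b (gw ?s)) (?P X0) = ?P ?s"
      using sim_pos[OF g posof_Mpos[OF g] vgs] G alP mem shL s by auto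
    have "cyc3 (comb_pos k (cm k a b (gw ?s)) (?P A0)) (comb_pos k (cm k a b (gw ?s)) (?P A1))
              (comb_pos k (cm k a b (gw ?s)) (?P X0)) \<in> Rset k ?A"
      using Rset_conj[OF p0M refl a0 a1 x0 dist base_R combg] .
    then show ?thesis using gp xP[OF x(1)] by simp
  qed
  have fin: "finite ?A"
  proof -
    have "?A \<subseteq> ?P ` set shapeL" using xP inA by blast
    then show ?thesis using finite_subset by blast
  qed
  show ?thesis
    using gen_even[OF fin a0 a1 _ Rset_id Rset_comp cyc_all pi] dist by auto
qed


type_synonym tt = "(nat \<times> sv) \<times> (nat \<times> sv) \<times> (nat \<times> sv)"

fun tmove :: "nat \<times> nat \<times> sv \<Rightarrow> tt \<Rightarrow> tt" where
  "tmove (i,j,c) (x0, x1, x2) =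
    (if i = 0 then
       (if j = 1 then (if snd x2 = c then ((fst x1, fs (snd x1)), x0, x2) else (x0,x1,x2))
        else (if snd x1 = c then ((fst x2, fs (snd x2)), x1, x0) else (x0,x1,x2)))
     else if i = 1 then
       (if j = 0 then (if snd x2 = c then (x1, (fst x0, fs (snd x0)), x2) else (x0,x1,x2))
        else (if snd x0 = c then (x0, (fst x2, fs (snd x2)), x1) else (x0,x1,x2)))
     else
       (if j = 0 then (if snd x1 = c then (x2, x1, (fst x0, fs (snd x0))) else (x0,x1,x2))
        else (if snd x0 = c then (x0, x2, (fst x1, fs (snd x1))) else (x0,x1,x2))))"

definition tcomb :: "(nat \<times> nat \<times> sv) list \<Rightarrow> tt \<Rightarrow> tt" where
  "tcomb ms t = foldr tmove ms t"

fun toL :: "tt \<Rightarrow> (nat \<times> sv) list" where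
  "toL (x0, x1, x2) = [x0, x1, x2]"

fun snds :: "tt \<Rightarrow> sv list" where
  "snds (x0, x1, x2) = [snd x0, snd x1, snd x2]"

definition tagT :: "sv list \<Rightarrow> tt" where
  "tagT s = ((0, s ! 0), (1, s ! 1), (2, s ! 2))"

lemma tagl_toL: "tagl s = toL (tagT s)"
  by (simp add: tagl_def tagT_def)

lemma map_snd_toL: "map snd (toL t) = snds t"
  by (cases t) auto

lemma smove_toL: "i < 3 \<Longrightarrow> j < 3 \<Longrightarrow> i \<noteq> j \<Longrightarrow> smove (i,j,c) (toL t) = toL (tmove (i,j,c) t)"
proof -
  assume ij: "i < 3" "j < 3" "i \<noteq> j"
  obtain x0 x1 x2 where t: "t = (x0,x1,x2)" by (metis prod.exhaust)
  have "i = 0 \<and> j = 1 \<or> i = 0 \<and> j = 2 \<or> i = 1 \<and> j = 0 \<or> i = 1 \<and> j = 2 \<or> i = 2 \<and> j = 0 \<or> i = 2 \<and> j = 1"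
    using ij by auto
  then show ?thesis unfolding t by (elim disjE) (auto simp: rem_def)
qed

lemma scomb_toL: "\<forall>m\<in>set ms. svm Lay m \<Longrightarrow> scomb ms (toL t) = toL (tcomb ms t)"
proof (induction ms)
  case Nil then show ?case by (simp add: scomb_def tcomb_def)
next
  case (Cons m ms)
  obtain i j c where m: "m = (i,j,c)" by (metis prod_cases3)
  have ij: "i < 3" "j < 3" "i \<noteq> j" using Cons.prems m by auto
  have "scomb (m # ms) (toL t) = smove m (toL (tcomb ms t))" using Cons by (simp add: scomb_Cons)
  also have "\<dots> = toL (tmove m (tcomb ms t))" using smove_toL[OF ij] m by simp
  finally show ?case by (simp add: tcomb_def)
qed

lemma toL_inj: "toL t = toL u \<Longrightarrow> t = u"
  by (cases t; cases u) auto

theorem type_thm2: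
  fixes base :: "(nat \<times> nat \<times> sv) list" and gw :: "sv list \<Rightarrow> (nat \<times> nat \<times> sv) list"
  assumes k2: "k \<ge> 2" and g: "good k a b Lay"
  and rng: "\<forall>x<k. alpha k a b x \<in> set syms"
  and vb: "\<forall>m\<in>set base. svm Lay m"
  and vg: "\<forall>s\<in>set shapeL. \<forall>m\<in>set (gw s). svm Lay m"
  and sh0: "\<forall>s\<in>set shapeL. length s = 3 \<and> set s \<subseteq> set Lay \<and> set s \<subseteq> set syms \<and> (sZ \<in> set s \<or> sK \<in> set s)"
  and mem: "A0 \<in> set shapeL" "A1 \<in> set shapeL" "X0 \<in> set shapeL" "distinct [A0, A1, X0]"
  and bf: "\<forall>x\<in>set syms. \<forall>y\<in>set syms. \<forall>z\<in>set syms. (x = sZ \<or> y = sZ \<or> z = sZ \<or> x = sK \<or> y = sK \<or> z = sK) \<longrightarrow>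
             [x,y,z] \<noteq> A0 \<longrightarrow> [x,y,z] \<noteq> A1 \<longrightarrow> [x,y,z] \<noteq> X0 \<longrightarrow>
             tcomb base ((0,x),(1,y),(2,z)) = ((0,x),(1,y),(2,z))"
  and bc: "snds (tcomb base (tagT A0)) = A1" "snds (tcomb base (tagT A1)) = X0"
          "snds (tcomb base (tagT X0)) = A0"
  and gc: "\<forall>s\<in>set shapeL. s \<notin> {A0, A1} \<longrightarrow> snds (tcomb (gw s) (tagT A0)) = A0 \<and>
             snds (tcomb (gw s) (tagT A1)) = A1 \<and> snds (tcomb (gw s) (tagT X0)) = s"
  and cl: "\<forall>s\<in>set shapeL. \<forall>i<3. \<forall>j<3. i \<noteq> j \<longrightarrow> spsi i j s \<in> set shapeL"
  and rot: "\<forall>t\<in>set reachL. \<exists>w\<in>set rotws. srot w t = A0"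
  and rotv: "\<forall>w\<in>set rotws. \<forall>x\<in>set w. vpair x"
  and p0: "external k p0" "alist k a b p0 \<in> set reachL"
  and pi: "\<pi> permutes conn_class k p0" "evenperm \<pi>"
  shows "\<pi> \<in> Rset k (conn_class k p0)"
proof (rule type_thm[OF k2 g rng vb vg _ mem _ _ _ _ _ cl rot rotv p0 pi])
  show "\<forall>s\<in>set shapeL. length s = 3 \<and> set s \<subseteq> set Lay \<and> s \<in> set (ext_trips syms)"
  proof
    fix s assume s: "s \<in> set shapeL"
    then have l: "length s = 3" and ss: "set s \<subseteq> set syms" and e: "sZ \<in> set s \<or> sK \<in> set s" using sh0 by auto
    obtain x y z where xyz: "s = [x,y,z]" using l by (metis length_0_conv length_Suc_conv numeral_3_eq_3)
    have "s \<in> set (trips syms)" using ss xyz by (auto simp: trips_def)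
    then show "length s = 3 \<and> set s \<subseteq> set Lay \<and> s \<in> set (ext_trips syms)"
      using sh0 s e by (auto simp: ext_trips_def)
  qed
  show "\<forall>t\<in>set (ext_trips syms). t \<notin> {A0, A1, X0} \<longrightarrow> scomb base (tagl t) = tagl t"
  proof (intro ballI impI)
    fix t assume t: "t \<in> set (ext_trips syms)" "t \<notin> {A0, A1, X0}"
    then obtain x y z where xyz: "t = [x,y,z]" "x \<in> set syms" "y \<in> set syms" "z \<in> set syms"
      by (auto simp: ext_trips_def trips_def)
    have e: "x = sZ \<or> y = sZ \<or> z = sZ \<or> x = sK \<or> y = sK \<or> z = sK" using t xyz by (auto simp: ext_trips_def)
    have H: "(x = sZ \<or> y = sZ \<or> z = sZ \<or> x = sK \<or> y = sK \<or> z = sK) \<longrightarrow>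
             [x,y,z] \<noteq> A0 \<longrightarrow> [x,y,z] \<noteq> A1 \<longrightarrow> [x,y,z] \<noteq> X0 \<longrightarrow>
             tcomb base ((0,x),(1,y),(2,z)) = ((0,x),(1,y),(2,z))" using bf xyz(2-4) by blast
    have "[x,y,z] \<noteq> A0" "[x,y,z] \<noteq> A1" "[x,y,z] \<noteq> X0" using t(2) xyz(1) by auto
    then have "tcomb base ((0,x),(1,y),(2,z)) = ((0,x),(1,y),(2,z))" using H e by blast
    moreover have "tagT t = ((0,x),(1,y),(2,z))" using xyz(1) by (simp add: tagT_def)
    ultimately have "tcomb base (tagT t) = tagT t" by simp
    then show "scomb base (tagl t) = tagl t" using scomb_toL[OF vb] by (simp add: tagl_toL)
  qed
  show "map snd (scomb base (tagl A0)) = A1" "map snd (scomb base (tagl A1)) = X0"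
       "map snd (scomb base (tagl X0)) = A0"
    using bc scomb_toL[OF vb] by (simp_all add: tagl_toL map_snd_toL)
  show "\<forall>s\<in>set shapeL. s \<notin> {A0, A1} \<longrightarrow> map snd (scomb (gw s) (tagl A0)) = A0 \<and>
             map snd (scomb (gw s) (tagl A1)) = A1 \<and> map snd (scomb (gw s) (tagl X0)) = s"
  proof (intro ballI impI)
    fix s assume s: "s \<in> set shapeL" "s \<notin> {A0, A1}"
    have v: "\<forall>m\<in>set (gw s). svm Lay m" using vg s by blast
    show "map snd (scomb (gw s) (tagl A0)) = A0 \<and>
             map snd (scomb (gw s) (tagl A1)) = A1 \<and> map snd (scomb (gw s) (tagl X0)) = s"
      using gc s scomb_toL[OF v] by (simp add: tagl_toL map_snd_toL)
  qed
qed


definition corner_lay :: "sv list" where "corner_lay = [sZ, sK]"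
definition corner_syms :: "sv list" where "corner_syms = [sZ, sW, sM, sFW, sK]"
definition corner_base :: "(nat \<times> nat \<times> sv) list" where "corner_base = [(1, 0, sZ), (0, 2, sZ), (0, 1, sZ), (0, 2, sK), (0, 1, sZ), (0, 1, sZ), (0, 1, sZ), (0, 2, sZ), (0, 2, sZ), (0, 2, sZ), (1, 0, sZ), (1, 0, sZ), (1, 0, sZ), (0, 2, sK), (0, 2, sK), (0, 2, sK)]"
definition corner_A0 :: "sv list" where "corner_A0 = [sZ, sZ, sZ]"
definition corner_A1 :: "sv list" where "corner_A1 = [sK, sK, sZ]"
definition corner_X0 :: "sv list" where "corner_X0 = [sZ, sK, sZ]"
definition corner_shape :: "sv list list" where "corner_shape = [[sZ, sZ, sZ], [sZ, sZ, sK], [sZ, sK, sZ], [sZ, sK, sK], [sK, sZ, sZ], [sK, sZ, sK], [sK, sK, sZ], [sK, sK, sK]]"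
definition corner_gt :: "(sv list \<times> (nat \<times> nat \<times> sv) list) list" where "corner_gt = [([sZ, sK, sZ], []), ([sK, sZ, sK], [(0, 1, sK), (2, 0, sZ), (0, 2, sK), (0, 1, sZ)]), ([sK, sK, sK], [(1, 2, sK), (1, 0, sZ), (0, 2, sZ)]), ([sZ, sZ, sK], [(2, 0, sZ), (0, 2, sK), (0, 1, sZ)]), ([sZ, sK, sK], [(2, 0, sK), (1, 2, sK)]), ([sK, sZ, sZ], [(2, 1, sK), (0, 2, sK)])]"
definition corner_rw :: "(nat \<times> nat) list list" where "corner_rw = [[], [(0, 2)], [(0, 1)], [(0, 2), (0, 1)], [(1, 0)], [(0, 2), (0, 2)], [(0, 1), (0, 1)], [(0, 2), (0, 1), (0, 1)]]"

definition midge_lay :: "sv list" where "midge_lay = [sZ, sK, sM]"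
definition midge_syms :: "sv list" where "midge_syms = [sZ, sW, sM, sFW, sK]"
definition midge_base :: "(nat \<times> nat \<times> sv) list" where "midge_base = [(1, 0, sZ), (0, 2, sZ), (0, 1, sZ), (0, 2, sM), (0, 1, sZ), (0, 1, sZ), (0, 1, sZ), (0, 2, sZ), (0, 2, sZ), (0, 2, sZ), (1, 0, sZ), (1, 0, sZ), (1, 0, sZ), (0, 2, sM), (0, 2, sM), (0, 2, sM)]"
definition midge_A0 :: "sv list" where "midge_A0 = [sK, sM, sZ]"
definition midge_A1 :: "sv list" where "midge_A1 = [sZ, sM, sZ]"
definition midge_X0 :: "sv list" where "midge_X0 = [sK, sZ, sM]"
definition midge_shape :: "sv list list" where "midge_shape = [[sZ, sZ, sM], [sZ, sM, sZ], [sZ, sM, sK], [sZ, sK, sM], [sM, sZ, sZ], [sM, sZ, sK], [sM, sK, sZ], [sM, sK, sK], [sK, sZ, sM], [sK, sM, sZ], [sK, sM, sK], [sK, sK, sM]]"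
definition midge_gt :: "(sv list \<times> (nat \<times> nat \<times> sv) list) list" where "midge_gt = [([sZ, sZ, sM], [(1, 0, sM)]), ([sZ, sM, sK], [(1, 0, sK), (0, 2, sZ)]), ([sM, sZ, sK], [(0, 2, sZ)]), ([sK, sM, sK], [(0, 1, sK), (0, 2, sZ)]), ([sZ, sK, sM], [(0, 1, sM), (0, 1, sM)]), ([sM, sK, sK], [(0, 2, sK), (0, 1, sM)]), ([sM, sZ, sZ], [(2, 0, sZ)]), ([sK, sZ, sM], []), ([sM, sK, sZ], [(2, 0, sK), (0, 1, sM)]), ([sK, sK, sM], [(0, 1, sM)])]"
definition midge_rw :: "(nat \<times> nat) list list" where "midge_rw = [[(1, 2), (0, 1)], [(0, 2)], [(0, 2), (0, 2)], [(1, 0), (0, 2)], [(0, 1)], [(2, 0), (0, 1)], [(1, 0)], [(2, 0), (1, 0)], [(1, 2)], [], [(2, 0)], [(2, 1)]]"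

definition wing_lay :: "sv list" where "wing_lay = [sZ, sK, sA, sFA]"
definition wing_syms :: "sv list" where "wing_syms = [sZ, sA, sW, sM, sFW, sFA, sK]"
definition wing_base :: "(nat \<times> nat \<times> sv) list" where "wing_base = [(1, 0, sZ), (0, 2, sZ), (0, 1, sZ), (0, 2, sA), (0, 1, sZ), (0, 1, sZ), (0, 1, sZ), (0, 2, sZ), (0, 2, sZ), (0, 2, sZ), (1, 0, sZ), (1, 0, sZ), (1, 0, sZ), (0, 2, sA), (0, 2, sA), (0, 2, sA)]"
definition wing_A0 :: "sv list" where "wing_A0 = [sK, sZ, sFA]"
definition wing_A1 :: "sv list" where "wing_A1 = [sK, sA, sZ]"
definition wing_X0 :: "sv list" where "wing_X0 = [sZ, sA, sZ]"
definition wing_shape :: "sv list list" where "wing_shape = [[sZ, sZ, sA], [sZ, sZ, sFA], [sZ, sA, sZ], [sZ, sA, sK], [sZ, sFA, sZ], [sZ, sFA, sK], [sZ, sK, sA], [sZ, sK, sFA], [sA, sZ, sZ], [sA, sZ, sK], [sA, sK, sZ], [sA, sK, sK], [sFA, sZ, sZ], [sFA, sZ, sK], [sFA, sK, sZ], [sFA, sK, sK], [sK, sZ, sA], [sK, sZ, sFA], [sK, sA, sZ], [sK, sA, sK], [sK, sFA, sZ], [sK, sFA, sK], [sK, sK, sA], [sK, sK, sFA]]"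
definition wing_gt :: "(sv list \<times> (nat \<times> nat \<times> sv) list) list" where "wing_gt = [([sK, sFA, sK], [(2, 0, sFA), (1, 2, sZ), (1, 2, sZ)]), ([sZ, sA, sZ], []), ([sFA, sZ, sZ], [(2, 1, sFA), (0, 2, sK), (1, 2, sZ)]), ([sZ, sZ, sA], [(0, 1, sA), (1, 2, sZ)]), ([sA, sK, sK], [(2, 0, sK), (1, 2, sZ)]), ([sZ, sZ, sFA], [(2, 1, sZ)]), ([sZ, sFA, sZ], [(1, 2, sZ), (0, 1, sA), (1, 2, sZ)]), ([sK, sZ, sA], [(0, 1, sA), (0, 1, sA), (1, 2, sZ)]), ([sFA, sK, sZ], [(0, 2, sK), (1, 2, sZ)]), ([sZ, sA, sK], [(2, 1, sZ), (0, 1, sA), (1, 2, sZ)]), ([sFA, sZ, sK], [(2, 0, sZ), (2, 1, sZ), (0, 2, sZ)]), ([sZ, sK, sA], [(1, 2, sZ)]), ([sZ, sK, sFA], [(1, 0, sFA), (2, 1, sZ), (0, 1, sFA)]), ([sK, sA, sK], [(1, 0, sK), (1, 2, sFA), (0, 2, sK), (1, 2, sZ)]), ([sA, sZ, sZ], [(2, 0, sA), (1, 0, sZ), (0, 2, sA)]), ([sK, sFA, sZ], [(0, 2, sFA), (1, 2, sZ), (0, 1, sA), (1, 2, sZ)]), ([sK, sK, sA], [(1, 0, sA), (1, 2, sZ)]), ([sZ, sFA, sK], [(1, 2, sZ), (1, 2, sZ)]), ([sK, sK, sFA], [(0, 2, sK), (0, 2, sK), (1, 2, sZ)]), ([sFA,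 sK, sK], [(1, 2, sFA), (0, 2, sK), (1, 2, sZ)]), ([sA, sK, sZ], [(2, 0, sK), (1, 0, sA), (1, 2, sZ)]), ([sA, sZ, sK], [(0, 1, sK), (1, 2, sZ), (1, 2, sZ)])]"
definition wing_rw :: "(nat \<times> nat) list list" where "wing_rw = [[(0, 2), (0, 2)], [(0, 1)], [(0, 2), (0, 1)], [(1, 2), (0, 1), (0, 1)], [(2, 1), (0, 1), (0, 1)], [(2, 0), (0, 1)], [(0, 2), (0, 2), (0, 1)], [(0, 1), (0, 1)], [(2, 1), (0, 1)], [(2, 0)], [(0, 2), (0, 1), (0, 1)], [(1, 2), (1, 0)], [(0, 2)], [(1, 2), (0, 1)], [(1, 0), (0, 2)], [(2, 0), (0, 1), (0, 1)], [(1, 2), (1, 2), (0, 1)], [], [(2, 1)], [(2, 0), (1, 0)], [(1, 2), (0, 2)], [(1, 2)], [(1, 2), (1, 2)], [(1, 0)]]"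

definition xcenter_lay :: "sv list" where "xcenter_lay = [sZ, sK, sA, sFA]"
definition xcenter_syms :: "sv list" where "xcenter_syms = [sZ, sA, sW, sM, sFW, sFA, sK]"
definition xcenter_base :: "(nat \<times> nat \<times> sv) list" where "xcenter_base = [(1, 0, sZ), (0, 2, sA), (0, 1, sZ), (0, 2, sFA), (0, 1, sZ), (0, 1, sZ), (0, 1, sZ), (0, 2, sA), (0, 2, sA), (0, 2, sA), (1, 0, sZ), (1, 0, sZ), (1, 0, sZ), (0, 2, sFA), (0, 2, sFA), (0, 2, sFA)]"
definition xcenter_A0 :: "sv list" where "xcenter_A0 = [sK, sA, sA]"
definition xcenter_A1 :: "sv list" where "xcenter_A1 = [sK, sFA, sA]"
definition xcenter_X0 :: "sv list" where "xcenter_X0 = [sA, sFA, sZ]"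
definition xcenter_shape :: "sv list list" where "xcenter_shape = [[sZ, sA, sA], [sZ, sA, sFA], [sZ, sFA, sA], [sZ, sFA, sFA], [sA, sZ, sA], [sA, sZ, sFA], [sA, sA, sZ], [sA, sA, sK], [sA, sFA, sZ], [sA, sFA, sK], [sA, sK, sA], [sA, sK, sFA], [sFA, sZ, sA], [sFA, sZ, sFA], [sFA, sA, sZ], [sFA, sA, sK], [sFA, sFA, sZ], [sFA, sFA, sK], [sFA, sK, sA], [sFA, sK, sFA], [sK, sA, sA], [sK, sA, sFA], [sK, sFA, sA], [sK, sFA, sFA]]"
definition xcenter_gt :: "(sv list \<times> (nat \<times> nat \<times> sv) list) list" where "xcenter_gt = [([sZ, sFA, sA], [(2, 1, sZ), (1, 0, sFA), (2, 1, sA), (0, 1, sZ)]), ([sZ, sFA, sFA], [(1, 0, sFA), (2, 1, sA), (0, 1, sZ)]), ([sFA, sA, sK], [(1, 2, sFA), (1, 2, sFA), (1, 0, sZ)]), ([sFA, sK, sA], [(1, 2, sFA), (0, 1, sZ), (0, 1, sZ)]), ([sFA, sK, sFA], [(1, 2, sFA), (1, 0, sZ)]), ([sA, sZ, sA], [(2, 1, sA)]), ([sA, sA, sZ], [(0, 1, sZ)]), ([sFA, sFA, sK], [(1, 2, sFA), (1, 2, sFA), (0, 1, sZ), (0, 1, sZ)]), ([sA, sZ, sFA], [(2, 1, sA), (0, 1, sZ)]), ([sK, sFA, sFA], [(1, 0, sFA), (1, 2, sA)]), ([sA, sFA, sZ], []), ([sA, sK, sA], [(1, 2, sA), (0, 1,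 sZ)]), ([sFA, sA, sZ], [(0, 1, sZ), (0, 1, sZ)]), ([sA, sK, sFA], [(1, 2, sA)]), ([sA, sA, sK], [(1, 2, sA), (1, 2, sA)]), ([sZ, sA, sA], [(1, 2, sZ), (0, 1, sFA), (1, 2, sA)]), ([sA, sFA, sK], [(1, 2, sA), (1, 2, sA), (0, 1, sZ)]), ([sFA, sZ, sA], [(2, 1, sFA), (1, 0, sZ)]), ([sZ, sA, sFA], [(0, 1, sFA), (1, 2, sA)]), ([sFA, sZ, sFA], [(2, 1, sFA), (0, 1, sZ), (0, 1, sZ)]), ([sFA, sFA, sZ], [(1, 0, sZ)]), ([sK, sA, sFA], [(0, 1, sFA), (2, 1, sA), (0, 1, sZ)])]"
definition xcenter_rw :: "(nat \<times> nat) list list" where "xcenter_rw = [[(2, 1), (0, 1), (0, 1)], [(0, 2), (0, 2)], [(0, 1), (0, 1)], [(1, 2), (0, 1), (0, 1)], [(0, 1)], [(1, 2), (0, 1)], [(0, 2)], [(2, 0), (0, 1)], [(0, 2), (0, 1)], [(2, 0), (0, 1), (0, 1)], [(1, 0), (0, 2)], [(0, 2), (0, 2), (0, 1)], [(2, 1), (0, 1)], [(1, 2), (1, 2), (0, 1)], [(1, 2), (0, 2)], [(2, 0)], [(0, 2), (0, 1), (0, 1)], [(2, 0), (1, 0)], [(1, 0)], [(1, 2), (1, 0)], [], [(1, 2)], [(2, 1)], [(1, 2), (1, 2)]]"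

definition plus_lay :: "sv list" where "plus_lay = [sZ, sK, sA, sFA, sM]"
definition plus_syms :: "sv list" where "plus_syms = [sZ, sA, sW, sM, sFW, sFA, sK]"
definition plus_base :: "(nat \<times> nat \<times> sv) list" where "plus_base = [(1, 0, sZ), (0, 2, sA), (0, 1, sZ), (0, 2, sM), (0, 1, sZ), (0, 1, sZ), (0, 1, sZ), (0, 2, sA), (0, 2, sA), (0, 2, sA), (1, 0, sZ), (1, 0, sZ), (1, 0, sZ), (0, 2, sM), (0, 2, sM), (0, 2, sM)]"
definition plus_A0 :: "sv list" where "plus_A0 = [sK, sM, sA]"
definition plus_A1 :: "sv list" where "plus_A1 = [sA, sM, sZ]"
definition plus_X0 :: "sv list" where "plus_X0 = [sK, sA, sM]"
definition plus_shape :: "sv list list" where "plus_shape = [[sZ, sA, sM], [sZ, sM, sA], [sZ, sM, sFA], [sZ, sFA, sM], [sA, sZ, sM], [sA, sM, sZ], [sA, sM, sK], [sA, sK, sM], [sM, sZ, sA], [sM, sZ, sFA], [sM, sA, sZ], [sM, sA, sK], [sM, sFA, sZ], [sM, sFA, sK], [sM, sK, sA], [sM, sK, sFA], [sFA, sZ, sM], [sFA, sM, sZ], [sFA, sM, sK], [sFA, sK, sM], [sK, sA, sM], [sK, sM, sA], [sK, sM, sFA], [sK, sFA, sM]]"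
definition plus_gt :: "(sv list \<times> (nat \<times> nat \<times> sv) list) list" where "plus_gt = [([sZ, sFA, sM], [(0, 1, sM), (0, 1, sM)]), ([sM, sZ, sA], [(1, 2, sM), (0, 2, sA)]), ([sM, sZ, sFA], [(2, 0, sZ), (1, 0, sM)]), ([sFA, sK, sM], [(0, 1, sM)]), ([sM, sFA, sZ], [(0, 2, sFA), (0, 1, sM), (0, 1, sM)]), ([sA, sM, sK], [(1, 0, sK), (0, 2, sA)]), ([sM, sA, sK], [(0, 2, sA)]), ([sA, sZ, sM], [(1, 0, sM)]), ([sZ, sM, sA], [(2, 1, sZ), (0, 1, sM), (0, 1, sM)]), ([sZ, sM, sFA], [(1, 2, sZ), (0, 1, sM), (0, 1, sM)]), ([sM, sK, sA], [(2, 0, sK), (0, 1, sM)]), ([sK, sFA, sM], [(1, 0, sA), (1, 2, sK), (1, 2, sK), (0, 1, sA)]), ([sFA, sM, sZ], [(2, 1, sFA), (0, 1, sM)]), ([sM, sK, sFA], [(0, 2, sK), (0, 1, sM)]), ([sM, sFA, sK], [(2, 0, sFA), (0, 1, sM), (0, 1, sM)]), ([sA, sK, sM], [(0, 2, sK), (0, 2, sK), (0, 1, sM)]), ([sK, sM, sFA], [(1, 0, sA), (2, 1, sK), (0, 1, sA)]), ([sFA, sM, sK], [(1, 2, sFA), (0, 1, sM)]), ([sZ, sA, sM], [(0, 2, sA), (0, 2, sA)]), ([sFA, sZ, sM], [(1, 2, sFA), (1, 2, sFA), (0, 1, sM)]), ([sM, sA, sZ], [(2, 0, sA)]), ([sK,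 sA, sM], [])]"
definition plus_rw :: "(nat \<times> nat) list list" where "plus_rw = [[(2, 1), (0, 1), (0, 1)], [(0, 1), (0, 1)], [(0, 2), (0, 2)], [(1, 2), (0, 1), (0, 1)], [(1, 2), (0, 1)], [(0, 2)], [(2, 0), (0, 1), (0, 1)], [(1, 0), (0, 2)], [(0, 1)], [(1, 2), (1, 2), (0, 1)], [(1, 2), (0, 2)], [(2, 0), (0, 1)], [(0, 2), (0, 1)], [(2, 0), (1, 0)], [(1, 0)], [(0, 2), (0, 2), (0, 1)], [(2, 1), (0, 1)], [(0, 2), (0, 1), (0, 1)], [(2, 0)], [(1, 2), (1, 0)], [(1, 2)], [], [(1, 2), (1, 2)], [(2, 1)]]"

definition oblique_lay :: "sv list" where "oblique_lay = [sZ, sK, sA, sFA, sB, sFB]"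
definition oblique_syms :: "sv list" where "oblique_syms = [sZ, sA, sB, sW, sM, sFW, sFB, sFA, sK]"
definition oblique_base :: "(nat \<times> nat \<times> sv) list" where "oblique_base = [(1, 0, sZ), (0, 2, sA), (0, 1, sZ), (0, 2, sB), (0, 1, sZ), (0, 1, sZ), (0, 1, sZ), (0, 2, sA), (0, 2, sA), (0, 2, sA), (1, 0, sZ), (1, 0, sZ), (1, 0, sZ), (0, 2, sB), (0, 2, sB), (0, 2, sB)]"
definition oblique_A0 :: "sv list" where "oblique_A0 = [sK, sB, sA]"
definition oblique_A1 :: "sv list" where "oblique_A1 = [sA, sB, sZ]"
definition oblique_X0 :: "sv list" where "oblique_X0 = [sK, sA, sFB]"
definition oblique_shape :: "sv list list" where "oblique_shape = [[sZ, sA, sB], [sZ, sB, sFA], [sZ, sFB, sA], [sZ, sFA, sFB], [sA, sZ, sFB], [sA, sB, sZ], [sA, sFB, sK], [sA, sK, sB], [sB, sZ, sA], [sB, sA, sK], [sB, sFA, sZ], [sB, sK, sFA], [sFB, sZ, sFA], [sFB, sA, sZ], [sFB, sFA, sK], [sFB, sK, sA], [sFA, sZ, sB], [sFA, sB, sK], [sFA, sFB, sZ], [sFA, sK, sFB], [sK, sA, sFB], [sK, sB, sA], [sK, sFB, sFA], [sK, sFA, sB]]"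
definition oblique_gt :: "(sv list \<times> (nat \<times> nat \<times> sv) list) list" where "oblique_gt = [([sA, sK, sB], [(0, 2, sK), (0, 2, sK), (0, 1, sFB)]), ([sZ, sB, sFA], [(1, 2, sZ), (0, 1, sFB), (0, 1, sFB)]), ([sK, sA, sFB], []), ([sZ, sFB, sA], [(2, 1, sZ), (0, 1, sFB), (0, 1, sFB)]), ([sZ, sFA, sFB], [(0, 1, sFB), (0, 1, sFB)]), ([sFB, sFA, sK], [(2, 0, sFA), (0, 1, sFB), (0, 1, sFB)]), ([sB, sZ, sA], [(1, 2, sB), (0, 2, sA)]), ([sFA, sFB, sZ], [(2, 1, sFA), (0, 1, sFB)]), ([sA, sFB, sK], [(1, 0, sK), (0, 2, sA)]), ([sFA, sZ, sB], [(1, 2, sFA), (1, 2, sFA), (0, 1, sFB)]), ([sZ, sA, sB], [(0, 2, sA), (0, 2, sA)]), ([sB, sFA, sZ], [(0, 2, sFA), (0, 1, sFB), (0, 1, sFB)]), ([sB, sA, sK], [(0, 2, sA)]), ([sFA, sK, sFB], [(0, 1, sFB)]), ([sA, sZ, sFB], [(1, 0, sFB)]), ([sFA, sB, sK], [(1, 2, sFA), (0, 1, sFB)]), ([sB, sK, sFA], [(0, 2, sK), (0, 1, sFB)]), ([sFB, sA, sZ], [(2, 0, sA)]), ([sK, sFB, sFA], [(1, 0, sA), (2, 1, sK), (0, 1, sA)]), ([sFB, sZ, sFA], [(2, 0, sZ), (1, 0, sFB)]), ([sK, sFA, sB], [(1, 0, sA), (1, 2, sK), (1, 2, sK), (0,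 1, sA)]), ([sFB, sK, sA], [(2, 0, sK), (0, 1, sFB)])]"
definition oblique_rw :: "(nat \<times> nat) list list" where "oblique_rw = [[(2, 1), (0, 1), (0, 1)], [(0, 2), (0, 2)], [(0, 1), (0, 1)], [(1, 2), (0, 1), (0, 1)], [(1, 2), (0, 1)], [(0, 2)], [(2, 0), (0, 1), (0, 1)], [(1, 0), (0, 2)], [(0, 1)], [(2, 0), (0, 1)], [(0, 2), (0, 1)], [(0, 2), (0, 2), (0, 1)], [(1, 2), (1, 2), (0, 1)], [(1, 2), (0, 2)], [(2, 0), (1, 0)], [(1, 0)], [(2, 1), (0, 1)], [(2, 0)], [(0, 2), (0, 1), (0, 1)], [(1, 2), (1, 0)], [(1, 2)], [], [(1, 2), (1, 2)], [(2, 1)]]"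

definition gw_of :: "(sv list \<times> (nat \<times> nat \<times> sv) list) list \<Rightarrow> sv list \<Rightarrow> (nat \<times> nat \<times> sv) list" where
  "gw_of tbl s = (case map_of tbl s of Some w \<Rightarrow> w | None \<Rightarrow> [])"


lemma corner_checks:
  "\<forall>m\<in>set corner_base. svm corner_lay m"
  "\<forall>s\<in>set corner_shape. \<forall>m\<in>set (gw_of corner_gt s). svm corner_lay m"
  "\<forall>s\<in>set corner_shape. length s = 3 \<and> set s \<subseteq> set corner_lay \<and> set s \<subseteq> set corner_syms \<and> (sZ \<in> set s \<or> sK \<in> set s)"
  "corner_A0 \<in> set corner_shape" "corner_A1 \<in> set corner_shape" "corner_X0 \<in> set corner_shape" "distinct [corner_A0, corner_A1, corner_X0]"
  "snds (tcomb corner_base (tagT corner_A0)) = corner_A1" "snds (tcomb corner_base (tagT corner_A1)) = corner_X0"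
  "snds (tcomb corner_base (tagT corner_X0)) = corner_A0"
  "\<forall>s\<in>set corner_shape. s \<notin> {corner_A0, corner_A1} \<longrightarrow> snds (tcomb (gw_of corner_gt s) (tagT corner_A0)) = corner_A0 \<and>
             snds (tcomb (gw_of corner_gt s) (tagT corner_A1)) = corner_A1 \<and> snds (tcomb (gw_of corner_gt s) (tagT corner_X0)) = s"
  "\<forall>s\<in>set corner_shape. \<forall>i<3. \<forall>j<3. i \<noteq> j \<longrightarrow> spsi i j s \<in> set corner_shape"
  "\<forall>t\<in>set corner_shape. \<exists>w\<in>set corner_rw. srot w t = corner_A0"
  "\<forall>w\<in>set corner_rw. \<forall>x\<in>set w. vpair x"
  by (simp_all add: corner_base_def corner_lay_def corner_shape_def corner_gt_def gw_of_def corner_syms_def corner_A0_def corner_A1_def corner_X0_def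
     tcomb_def tagT_def all3 spsi_def srot_def corner_rw_def)

lemma corner_bf:
  "\<forall>x\<in>set corner_syms. \<forall>y\<in>set corner_syms. \<forall>z\<in>set corner_syms. (x = sZ \<or> y = sZ \<or> z = sZ \<or> x = sK \<or> y = sK \<or> z = sK) \<longrightarrow>
             [x,y,z] \<noteq> corner_A0 \<longrightarrow> [x,y,z] \<noteq> corner_A1 \<longrightarrow> [x,y,z] \<noteq> corner_X0 \<longrightarrow>
             tcomb corner_base ((0,x),(1,y),(2,z)) = ((0,x),(1,y),(2,z))"
  unfolding corner_syms_def corner_A0_def corner_A1_def corner_X0_def tcomb_def corner_base_def
  by (simp only: list.set ball_simps foldr.simps o_apply tmove.simps fst_conv snd_conv fs.simps sv.distinct sv.simps if_True if_False simp_thms zero_neq_one one_neq_zero zero_neq_numeral numeral_neq_zero num.simps numeral_eq_iff numeral_eq_one_iff one_eq_numeral_iff prod.inject refl id_apply list.inject list.distinct)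


lemma midge_checks:
  "\<forall>m\<in>set midge_base. svm midge_lay m"
  "\<forall>s\<in>set midge_shape. \<forall>m\<in>set (gw_of midge_gt s). svm midge_lay m"
  "\<forall>s\<in>set midge_shape. length s = 3 \<and> set s \<subseteq> set midge_lay \<and> set s \<subseteq> set midge_syms \<and> (sZ \<in> set s \<or> sK \<in> set s)"
  "midge_A0 \<in> set midge_shape" "midge_A1 \<in> set midge_shape" "midge_X0 \<in> set midge_shape" "distinct [midge_A0, midge_A1, midge_X0]"
  "snds (tcomb midge_base (tagT midge_A0)) = midge_A1" "snds (tcomb midge_base (tagT midge_A1)) = midge_X0"
  "snds (tcomb midge_base (tagT midge_X0)) = midge_A0"
  "\<forall>s\<in>set midge_shape. s \<notin> {midge_A0, midge_A1} \<longrightarrow> snds (tcomb (gw_of midge_gt s) (tagT midge_A0)) = midge_A0 \<and>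
             snds (tcomb (gw_of midge_gt s) (tagT midge_A1)) = midge_A1 \<and> snds (tcomb (gw_of midge_gt s) (tagT midge_X0)) = s"
  "\<forall>s\<in>set midge_shape. \<forall>i<3. \<forall>j<3. i \<noteq> j \<longrightarrow> spsi i j s \<in> set midge_shape"
  "\<forall>t\<in>set midge_shape. \<exists>w\<in>set midge_rw. srot w t = midge_A0"
  "\<forall>w\<in>set midge_rw. \<forall>x\<in>set w. vpair x"
  by (simp_all add: midge_base_def midge_lay_def midge_shape_def midge_gt_def gw_of_def midge_syms_def midge_A0_def midge_A1_def midge_X0_def
     tcomb_def tagT_def all3 spsi_def srot_def midge_rw_def)

lemma midge_bf:
  "\<forall>x\<in>set midge_syms. \<forall>y\<in>set midge_syms. \<forall>z\<in>set midge_syms. (x = sZ \<or> y = sZ \<or> z = sZ \<or> x = sK \<or> y = sK \<or> z = sK) \<longrightarrow>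
             [x,y,z] \<noteq> midge_A0 \<longrightarrow> [x,y,z] \<noteq> midge_A1 \<longrightarrow> [x,y,z] \<noteq> midge_X0 \<longrightarrow>
             tcomb midge_base ((0,x),(1,y),(2,z)) = ((0,x),(1,y),(2,z))"
  unfolding midge_syms_def midge_A0_def midge_A1_def midge_X0_def tcomb_def midge_base_def
  by (simp only: list.set ball_simps foldr.simps o_apply tmove.simps fst_conv snd_conv fs.simps sv.distinct sv.simps if_True if_False simp_thms zero_neq_one one_neq_zero zero_neq_numeral numeral_neq_zero num.simps numeral_eq_iff numeral_eq_one_iff one_eq_numeral_iff prod.inject refl id_apply list.inject list.distinct)


lemma wing_checks:
  "\<forall>m\<in>set wing_base. svm wing_lay m"
  "\<forall>s\<in>set wing_shape. \<forall>m\<in>set (gw_of wing_gt s). svm wing_lay m"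
  "\<forall>s\<in>set wing_shape. length s = 3 \<and> set s \<subseteq> set wing_lay \<and> set s \<subseteq> set wing_syms \<and> (sZ \<in> set s \<or> sK \<in> set s)"
  "wing_A0 \<in> set wing_shape" "wing_A1 \<in> set wing_shape" "wing_X0 \<in> set wing_shape" "distinct [wing_A0, wing_A1, wing_X0]"
  "snds (tcomb wing_base (tagT wing_A0)) = wing_A1" "snds (tcomb wing_base (tagT wing_A1)) = wing_X0"
  "snds (tcomb wing_base (tagT wing_X0)) = wing_A0"
  "\<forall>s\<in>set wing_shape. s \<notin> {wing_A0, wing_A1} \<longrightarrow> snds (tcomb (gw_of wing_gt s) (tagT wing_A0)) = wing_A0 \<and>
             snds (tcomb (gw_of wing_gt s) (tagT wing_A1)) = wing_A1 \<and> snds (tcomb (gw_of wing_gt s) (tagT wing_X0)) = s"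
  "\<forall>s\<in>set wing_shape. \<forall>i<3. \<forall>j<3. i \<noteq> j \<longrightarrow> spsi i j s \<in> set wing_shape"
  "\<forall>t\<in>set wing_shape. \<exists>w\<in>set wing_rw. srot w t = wing_A0"
  "\<forall>w\<in>set wing_rw. \<forall>x\<in>set w. vpair x"
  by (simp_all add: wing_base_def wing_lay_def wing_shape_def wing_gt_def gw_of_def wing_syms_def wing_A0_def wing_A1_def wing_X0_def
     tcomb_def tagT_def all3 spsi_def srot_def wing_rw_def)

lemma wing_bf:
  "\<forall>x\<in>set wing_syms. \<forall>y\<in>set wing_syms. \<forall>z\<in>set wing_syms. (x = sZ \<or> y = sZ \<or> z = sZ \<or> x = sK \<or> y = sK \<or> z = sK) \<longrightarrow>
             [x,y,z] \<noteq> wing_A0 \<longrightarrow> [x,y,z] \<noteq> wing_A1 \<longrightarrow> [x,y,z] \<noteq> wing_X0 \<longrightarrow>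
             tcomb wing_base ((0,x),(1,y),(2,z)) = ((0,x),(1,y),(2,z))"
  unfolding wing_syms_def wing_A0_def wing_A1_def wing_X0_def tcomb_def wing_base_def
  by (simp only: list.set ball_simps foldr.simps o_apply tmove.simps fst_conv snd_conv fs.simps sv.distinct sv.simps if_True if_False simp_thms zero_neq_one one_neq_zero zero_neq_numeral numeral_neq_zero num.simps numeral_eq_iff numeral_eq_one_iff one_eq_numeral_iff prod.inject refl id_apply list.inject list.distinct)


lemma xcenter_checks:
  "\<forall>m\<in>set xcenter_base. svm xcenter_lay m"
  "\<forall>s\<in>set xcenter_shape. \<forall>m\<in>set (gw_of xcenter_gt s). svm xcenter_lay m"
  "\<forall>s\<in>set xcenter_shape. length s = 3 \<and> set s \<subseteq> set xcenter_lay \<and> set s \<subseteq> set xcenter_syms \<and> (sZ \<in> set s \<or> sK \<in> set s)"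
  "xcenter_A0 \<in> set xcenter_shape" "xcenter_A1 \<in> set xcenter_shape" "xcenter_X0 \<in> set xcenter_shape" "distinct [xcenter_A0, xcenter_A1, xcenter_X0]"
  "snds (tcomb xcenter_base (tagT xcenter_A0)) = xcenter_A1" "snds (tcomb xcenter_base (tagT xcenter_A1)) = xcenter_X0"
  "snds (tcomb xcenter_base (tagT xcenter_X0)) = xcenter_A0"
  "\<forall>s\<in>set xcenter_shape. s \<notin> {xcenter_A0, xcenter_A1} \<longrightarrow> snds (tcomb (gw_of xcenter_gt s) (tagT xcenter_A0)) = xcenter_A0 \<and>
             snds (tcomb (gw_of xcenter_gt s) (tagT xcenter_A1)) = xcenter_A1 \<and> snds (tcomb (gw_of xcenter_gt s) (tagT xcenter_X0)) = s"
  "\<forall>s\<in>set xcenter_shape. \<forall>i<3. \<forall>j<3. i \<noteq> j \<longrightarrow> spsi i j s \<in> set xcenter_shape"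
  "\<forall>t\<in>set xcenter_shape. \<exists>w\<in>set xcenter_rw. srot w t = xcenter_A0"
  "\<forall>w\<in>set xcenter_rw. \<forall>x\<in>set w. vpair x"
  by (simp_all add: xcenter_base_def xcenter_lay_def xcenter_shape_def xcenter_gt_def gw_of_def xcenter_syms_def xcenter_A0_def xcenter_A1_def xcenter_X0_def
     tcomb_def tagT_def all3 spsi_def srot_def xcenter_rw_def)

lemma xcenter_bf:
  "\<forall>x\<in>set xcenter_syms. \<forall>y\<in>set xcenter_syms. \<forall>z\<in>set xcenter_syms. (x = sZ \<or> y = sZ \<or> z = sZ \<or> x = sK \<or> y = sK \<or> z = sK) \<longrightarrow>
             [x,y,z] \<noteq> xcenter_A0 \<longrightarrow> [x,y,z] \<noteq> xcenter_A1 \<longrightarrow> [x,y,z] \<noteq> xcenter_X0 \<longrightarrow>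
             tcomb xcenter_base ((0,x),(1,y),(2,z)) = ((0,x),(1,y),(2,z))"
  unfolding xcenter_syms_def xcenter_A0_def xcenter_A1_def xcenter_X0_def tcomb_def xcenter_base_def
  by (simp only: list.set ball_simps foldr.simps o_apply tmove.simps fst_conv snd_conv fs.simps sv.distinct sv.simps if_True if_False simp_thms zero_neq_one one_neq_zero zero_neq_numeral numeral_neq_zero num.simps numeral_eq_iff numeral_eq_one_iff one_eq_numeral_iff prod.inject refl id_apply list.inject list.distinct)


lemma plus_checks:
  "\<forall>m\<in>set plus_base. svm plus_lay m"
  "\<forall>s\<in>set plus_shape. \<forall>m\<in>set (gw_of plus_gt s). svm plus_lay m"
  "\<forall>s\<in>set plus_shape. length s = 3 \<and> set s \<subseteq> set plus_lay \<and> set s \<subseteq> set plus_syms \<and> (sZ \<in> set s \<or> sK \<in> set s)"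
  "plus_A0 \<in> set plus_shape" "plus_A1 \<in> set plus_shape" "plus_X0 \<in> set plus_shape" "distinct [plus_A0, plus_A1, plus_X0]"
  "snds (tcomb plus_base (tagT plus_A0)) = plus_A1" "snds (tcomb plus_base (tagT plus_A1)) = plus_X0"
  "snds (tcomb plus_base (tagT plus_X0)) = plus_A0"
  "\<forall>s\<in>set plus_shape. s \<notin> {plus_A0, plus_A1} \<longrightarrow> snds (tcomb (gw_of plus_gt s) (tagT plus_A0)) = plus_A0 \<and>
             snds (tcomb (gw_of plus_gt s) (tagT plus_A1)) = plus_A1 \<and> snds (tcomb (gw_of plus_gt s) (tagT plus_X0)) = s"
  "\<forall>s\<in>set plus_shape. \<forall>i<3. \<forall>j<3. i \<noteq> j \<longrightarrow> spsi i j s \<in> set plus_shape"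
  "\<forall>t\<in>set plus_shape. \<exists>w\<in>set plus_rw. srot w t = plus_A0"
  "\<forall>w\<in>set plus_rw. \<forall>x\<in>set w. vpair x"
  by (simp_all add: plus_base_def plus_lay_def plus_shape_def plus_gt_def gw_of_def plus_syms_def plus_A0_def plus_A1_def plus_X0_def
     tcomb_def tagT_def all3 spsi_def srot_def plus_rw_def)

lemma plus_bf:
  "\<forall>x\<in>set plus_syms. \<forall>y\<in>set plus_syms. \<forall>z\<in>set plus_syms. (x = sZ \<or> y = sZ \<or> z = sZ \<or> x = sK \<or> y = sK \<or> z = sK) \<longrightarrow>
             [x,y,z] \<noteq> plus_A0 \<longrightarrow> [x,y,z] \<noteq> plus_A1 \<longrightarrow> [x,y,z] \<noteq> plus_X0 \<longrightarrow>
             tcomb plus_base ((0,x),(1,y),(2,z)) = ((0,x),(1,y),(2,z))"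
  unfolding plus_syms_def plus_A0_def plus_A1_def plus_X0_def tcomb_def plus_base_def
  by (simp only: list.set ball_simps foldr.simps o_apply tmove.simps fst_conv snd_conv fs.simps sv.distinct sv.simps if_True if_False simp_thms zero_neq_one one_neq_zero zero_neq_numeral numeral_neq_zero num.simps numeral_eq_iff numeral_eq_one_iff one_eq_numeral_iff prod.inject refl id_apply list.inject list.distinct)


lemma oblique_checks:
  "\<forall>m\<in>set oblique_base. svm oblique_lay m"
  "\<forall>s\<in>set oblique_shape. \<forall>m\<in>set (gw_of oblique_gt s). svm oblique_lay m"
  "\<forall>s\<in>set oblique_shape. length s = 3 \<and> set s \<subseteq> set oblique_lay \<and> set s \<subseteq> set oblique_syms \<and> (sZ \<in> set s \<or> sK \<in> set s)"
  "oblique_A0 \<in> set oblique_shape" "oblique_A1 \<in> set oblique_shape" "oblique_X0 \<in> set oblique_shape" "distinct [oblique_A0, oblique_A1, oblique_X0]"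
  "snds (tcomb oblique_base (tagT oblique_A0)) = oblique_A1" "snds (tcomb oblique_base (tagT oblique_A1)) = oblique_X0"
  "snds (tcomb oblique_base (tagT oblique_X0)) = oblique_A0"
  "\<forall>s\<in>set oblique_shape. s \<notin> {oblique_A0, oblique_A1} \<longrightarrow> snds (tcomb (gw_of oblique_gt s) (tagT oblique_A0)) = oblique_A0 \<and>
             snds (tcomb (gw_of oblique_gt s) (tagT oblique_A1)) = oblique_A1 \<and> snds (tcomb (gw_of oblique_gt s) (tagT oblique_X0)) = s"
  "\<forall>s\<in>set oblique_shape. \<forall>i<3. \<forall>j<3. i \<noteq> j \<longrightarrow> spsi i j s \<in> set oblique_shape"
  "\<forall>t\<in>set oblique_shape. \<exists>w\<in>set oblique_rw. srot w t = oblique_A0"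
  "\<forall>w\<in>set oblique_rw. \<forall>x\<in>set w. vpair x"
  by (simp_all add: oblique_base_def oblique_lay_def oblique_shape_def oblique_gt_def gw_of_def oblique_syms_def oblique_A0_def oblique_A1_def oblique_X0_def
     tcomb_def tagT_def all3 spsi_def srot_def oblique_rw_def)

lemma oblique_bf:
  "\<forall>x\<in>set oblique_syms. \<forall>y\<in>set oblique_syms. \<forall>z\<in>set oblique_syms. (x = sZ \<or> y = sZ \<or> z = sZ \<or> x = sK \<or> y = sK \<or> z = sK) \<longrightarrow>
             [x,y,z] \<noteq> oblique_A0 \<longrightarrow> [x,y,z] \<noteq> oblique_A1 \<longrightarrow> [x,y,z] \<noteq> oblique_X0 \<longrightarrow>
             tcomb oblique_base ((0,x),(1,y),(2,z)) = ((0,x),(1,y),(2,z))"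
  unfolding oblique_syms_def oblique_A0_def oblique_A1_def oblique_X0_def tcomb_def oblique_base_def
  by (simp only: list.set ball_simps foldr.simps o_apply tmove.simps fst_conv snd_conv fs.simps sv.distinct sv.simps if_True if_False simp_thms zero_neq_one one_neq_zero zero_neq_numeral numeral_neq_zero num.simps numeral_eq_iff numeral_eq_one_iff one_eq_numeral_iff prod.inject refl id_apply list.inject list.distinct)

definition okp :: "nat \<Rightarrow> nat \<Rightarrow> nat \<Rightarrow> bool" where
  "okp k a b \<longleftrightarrow> k \<ge> 2 \<and> (a = 0 \<or> (0 < a \<and> 2 * a < k - 1)) \<and> (b = 0 \<or> (0 < b \<and> 2 * b < k - 1 \<and> b \<noteq> a))"

lemma okpD: "okp k a b \<Longrightarrow> k \<ge> 2 \<and> (a = 0 \<or> (0 < a \<and> 2 * a < k - 1)) \<and> (b = 0 \<or> (0 < b \<and> 2 * b < k - 1 \<and> b \<noteq> a))"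
  by (simp add: okp_def)

lemma aZ: "alpha k a b 0 = sZ" by (simp add: alpha_def)
lemma aK: "k \<ge> 2 \<Longrightarrow> alpha k a b (k - 1) = sK" by (simp add: alpha_def)
lemma aA: "okp k a b \<Longrightarrow> a \<noteq> 0 \<Longrightarrow> alpha k a b a = sA"
  by (drule okpD) (simp add: alpha_def)
lemma aFA: "okp k a b \<Longrightarrow> a \<noteq> 0 \<Longrightarrow> alpha k a b (k - 1 - a) = sFA"
proof -
  assume o: "okp k a b" "a \<noteq> 0"
  have "k - 1 - a \<noteq> 0" "k - 1 - a \<noteq> k - 1" "k - 1 - a \<noteq> a" using okpD[OF o(1)] o(2) by auto
  then show ?thesis by (simp add: alpha_def)
qed
lemma aB: "okp k a b \<Longrightarrow> b \<noteq> 0 \<Longrightarrow> alpha k a b b = sB"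
proof -
  assume o: "okp k a b" "b \<noteq> 0"
  have "b \<noteq> 0" "b \<noteq> k - 1" "b \<noteq> a" "b \<noteq> k - 1 - a" using okpD[OF o(1)] o(2) by auto
  then show ?thesis by (simp add: alpha_def)
qed
lemma aFB: "okp k a b \<Longrightarrow> b \<noteq> 0 \<Longrightarrow> alpha k a b (k - 1 - b) = sFB"
proof -
  assume o: "okp k a b" "b \<noteq> 0"
  have "k - 1 - b \<noteq> 0" "k - 1 - b \<noteq> k - 1" "k - 1 - b \<noteq> a" "k - 1 - b \<noteq> k - 1 - a" "k - 1 - b \<noteq> b"
    using okpD[OF o(1)] o(2) by auto
  then show ?thesis by (simp add: alpha_def)
qed
lemma aM: "okp k a b \<Longrightarrow> 2 * y = k - 1 \<Longrightarrow> alpha k a b y = sM"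
proof -
  assume o: "okp k a b" "2 * y = k - 1"
  have "y \<noteq> 0" "y \<noteq> k - 1" "y \<noteq> a" "y \<noteq> k - 1 - a" "y \<noteq> b" "y \<noteq> k - 1 - b"
    using okpD[OF o(1)] o(2) by auto
  then show ?thesis using o(2) by (simp add: alpha_def)
qed
lemma aW: "okp k a b \<Longrightarrow> 2 * y < k - 1 \<Longrightarrow> y \<noteq> 0 \<Longrightarrow> y \<noteq> a \<Longrightarrow> y \<noteq> b \<Longrightarrow> alpha k a b y = sW"
proof -
  assume o: "okp k a b" "2 * y < k - 1" "y \<noteq> 0" "y \<noteq> a" "y \<noteq> b"
  have "y \<noteq> k - 1" "y \<noteq> k - 1 - a" "y \<noteq> k - 1 - b" "2 * y \<noteq> k - 1"
    using okpD[OF o(1)] o(2) by auto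
  then show ?thesis using o by (simp add: alpha_def)
qed
lemma aFW: "okp k a b \<Longrightarrow> 2 * y > k - 1 \<Longrightarrow> y < k \<Longrightarrow> y \<noteq> k - 1 \<Longrightarrow> y \<noteq> k - 1 - a \<Longrightarrow> y \<noteq> k - 1 - b \<Longrightarrow> alpha k a b y = sFW"
proof -
  assume o: "okp k a b" "2 * y > k - 1" "y < k" "y \<noteq> k - 1" "y \<noteq> k - 1 - a" "y \<noteq> k - 1 - b"
  have "y \<noteq> 0" "y \<noteq> a" "y \<noteq> b" "2 * y \<noteq> k - 1" "\<not> 2 * y < k - 1"
    using okpD[OF o(1)] o(2) by auto
  then show ?thesis using o by (simp add: alpha_def)
qed

lemma alpha_cases:
  assumes ok: "okp k a b" and x: "x < k"
  shows "(x = 0 \<and> alpha k a b x = sZ) \<or> (x = k - 1 \<and> alpha k a b x = sK) \<or>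
         (a \<noteq> 0 \<and> x = a \<and> alpha k a b x = sA) \<or> (a \<noteq> 0 \<and> x = k - 1 - a \<and> alpha k a b x = sFA) \<or>
         (b \<noteq> 0 \<and> x = b \<and> alpha k a b x = sB) \<or> (b \<noteq> 0 \<and> x = k - 1 - b \<and> alpha k a b x = sFB) \<or>
         (2 * x = k - 1 \<and> alpha k a b x = sM) \<or>
         (2 * x < k - 1 \<and> x \<noteq> 0 \<and> x \<noteq> a \<and> x \<noteq> b \<and> alpha k a b x = sW) \<or>
         (2 * x > k - 1 \<and> x \<noteq> k - 1 \<and> x \<noteq> k - 1 - a \<and> x \<noteq> k - 1 - b \<and> alpha k a b x = sFW)"
proof -
  have k: "k \<ge> 2" using okpD[OF ok] by simp
  show ?thesis
  proof (cases "x = 0")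
    case True then show ?thesis using aZ by simp
  next
    case n0: False
    show ?thesis
    proof (cases "x = k - 1")
      case True then show ?thesis using aK[OF k] by simp
    next
      case nK: False
      show ?thesis
      proof (cases "a \<noteq> 0 \<and> x = a")
        case True then show ?thesis using aA[OF ok] by simp
      next
        case na: False
        show ?thesis
        proof (cases "a \<noteq> 0 \<and> x = k - 1 - a")
          case True then show ?thesis using aFA[OF ok] by simp
        next
          case nfa: False
          show ?thesis
          proof (cases "b \<noteq> 0 \<and> x = b")
            case True then show ?thesis using aB[OF ok] by simp
          next
            case nb: False
            show ?thesis
            proof (cases "b \<noteq> 0 \<and> x = k - 1 - b")
              case True then show ?thesis using aFB[OF ok] by simp
            next
              case nfb: False
              have xa: "x \<noteq> a" using na n0 by auto
              have xb: "x \<noteq> b" using nb n0 by auto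
              have xfa: "x \<noteq> k - 1 - a" using nfa nK by auto
              have xfb: "x \<noteq> k - 1 - b" using nfb nK by auto
              consider "2 * x = k - 1" | "2 * x < k - 1" | "2 * x > k - 1" by linarith
              then show ?thesis
              proof cases
                case 1 then show ?thesis using aM[OF ok] by simp
              next
                case 2
                have "alpha k a b x = sW" using aW[OF ok 2 n0 xa xb] .
                then show ?thesis using 2 n0 xa xb by simp
              next
                case 3
                have "alpha k a b x = sFW" using aFW[OF ok 3 x nK xfa xfb] .
                then show ?thesis using 3 nK xfa xfb by simp
              qed
            qed
          qed
        qed
      qed
    qed
  qed
qed

lemma alpha_flip:
  assumes ok: "okp k a b" and x: "x < k"
  shows "alpha k a b (k - 1 - x) = fs (alpha k a b x)"
proof -
  have k: "k \<ge> 2" and pa: "a = 0 \<or> (0 < a \<and> 2 * a < k - 1)" and pb: "b = 0 \<or> (0 < b \<and> 2 * b < k - 1 \<and> b \<noteq> a)"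
    using okpD[OF ok] by auto
  from alpha_cases[OF ok x] show ?thesis
  proof (elim disjE conjE)
    assume "x = 0" "alpha k a b x = sZ" then show ?thesis using aK[OF k] by simp
  next
    assume "x = k - 1" "alpha k a b x = sK" then show ?thesis using aZ by simp
  next
    assume "a \<noteq> 0" "x = a" "alpha k a b x = sA" then show ?thesis using aFA[OF ok] by simp
  next
    assume h: "a \<noteq> 0" "x = k - 1 - a" "alpha k a b x = sFA"
    then have "k - 1 - x = a" using pa by auto
    then show ?thesis using aA[OF ok h(1)] h by simp
  next
    assume "b \<noteq> 0" "x = b" "alpha k a b x = sB" then show ?thesis using aFB[OF ok] by simp
  next
    assume h: "b \<noteq> 0" "x = k - 1 - b" "alpha k a b x = sFB"
    then have "k - 1 - x = b" using pb by auto
    then show ?thesis using aB[OF ok h(1)] h by simp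
  next
    assume h: "2 * x = k - 1" "alpha k a b x = sM"
    then have "2 * (k - 1 - x) = k - 1" by auto
    then show ?thesis using aM[OF ok] h by simp
  next
    assume h: "2 * x < k - 1" "x \<noteq> 0" "x \<noteq> a" "x \<noteq> b" "alpha k a b x = sW"
    have "2 * (k - 1 - x) > k - 1" "k - 1 - x < k" "k - 1 - x \<noteq> k - 1" "k - 1 - x \<noteq> k - 1 - a" "k - 1 - x \<noteq> k - 1 - b"
      using h x pa pb by auto
    then show ?thesis using aFW[OF ok] h by simp
  next
    assume h: "k - 1 < 2 * x" "x \<noteq> k - 1" "x \<noteq> k - 1 - a" "x \<noteq> k - 1 - b" "alpha k a b x = sFW"
    have "2 * (k - 1 - x) < k - 1" "k - 1 - x \<noteq> 0" "k - 1 - x \<noteq> a" "k - 1 - x \<noteq> b"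
      using h x pa pb by auto
    then show ?thesis using aW[OF ok] h by simp
  qed
qed

lemma alpha_fix:
  assumes ok: "okp k a b" and x: "x < k" and e: "alpha k a b (k - 1 - x) = alpha k a b x"
  shows "k - 1 - x = x"
proof -
  have "fs (alpha k a b x) = alpha k a b x" using e alpha_flip[OF ok x] by simp
  then have "alpha k a b x = sM" by (cases "alpha k a b x") auto
  then have "2 * x = k - 1" using alpha_cases[OF ok x] by auto
  then show ?thesis by auto
qed

lemma good_gen:
  assumes ok: "okp k a b"
  and LA: "sA \<in> set Lay \<or> sFA \<in> set Lay \<Longrightarrow> a \<noteq> 0"
  and LB: "sB \<in> set Lay \<or> sFB \<in> set Lay \<Longrightarrow> b \<noteq> 0"
  and LM: "sM \<in> set Lay \<Longrightarrow> odd k"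
  and LW: "sW \<notin> set Lay" "sFW \<notin> set Lay"
  shows "good k a b Lay"
proof -
  have k: "k \<ge> 2" and pa: "a = 0 \<or> (0 < a \<and> 2 * a < k - 1)" and pb: "b = 0 \<or> (0 < b \<and> 2 * b < k - 1 \<and> b \<noteq> a)"
    using okpD[OF ok] by auto
  have G3: "alpha k a b x = c \<longleftrightarrow> x = gam k a b c" if c: "c \<in> set Lay" and x: "x < k" for c x
  proof (cases c)
    case sZ then show ?thesis using alpha_cases[OF ok x] aZ by auto
  next
    case sK then show ?thesis using alpha_cases[OF ok x] aK[OF k] by auto
  next
    case sA then show ?thesis using alpha_cases[OF ok x] aA[OF ok] LA c by auto
  next
    case sFA then show ?thesis using alpha_cases[OF ok x] aFA[OF ok] LA c by auto
  next
    case sB then show ?thesis using alpha_cases[OF ok x] aB[OF ok] LB c by auto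
  next
    case sFB then show ?thesis using alpha_cases[OF ok x] aFB[OF ok] LB c by auto
  next
    case sM
    have o: "odd k" using LM c sM by simp
    then have m: "2 * ((k - 1) div 2) = k - 1" by presburger
    show ?thesis
    proof
      assume "alpha k a b x = c"
      then have "2 * x = k - 1" using alpha_cases[OF ok x] sM by auto
      then show "x = gam k a b c" using sM by simp
    next
      assume "x = gam k a b c"
      then show "alpha k a b x = c" using sM aM[OF ok m] by simp
    qed
  next
    case sW then show ?thesis using LW c by simp
  next
    case sFW then show ?thesis using LW c by simp
  qed
  have G4: "gam k a b c < k" if c: "c \<in> set Lay" for c
    using pa pb k LW c by (cases c) auto
  show ?thesis unfolding good_def using alpha_flip[OF ok] alpha_fix[OF ok] G3 G4 by blast
qed


lemma rng_gen:
  assumes ok: "okp k a b"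
  and "sZ \<in> set syms \<and> sK \<in> set syms \<and> sM \<in> set syms \<and> sW \<in> set syms \<and> sFW \<in> set syms \<and>
       (a \<noteq> 0 \<longrightarrow> sA \<in> set syms \<and> sFA \<in> set syms) \<and> (b \<noteq> 0 \<longrightarrow> sB \<in> set syms \<and> sFB \<in> set syms)"
  shows "\<forall>x<k. alpha k a b x \<in> set syms"
proof (intro allI impI)
  fix x assume x: "x < k"
  from alpha_cases[OF ok x] show "alpha k a b x \<in> set syms" using assms(2) by (elim disjE) auto
qed


lemma corner_apply:
  assumes H: "k \<ge> 2" and e: "external k q" and s: "alist k 0 0 q \<in> set corner_shape"
  and pi: "\<pi> permutes conn_class k q" "evenperm \<pi>"
  shows "\<pi> \<in> Rset k (conn_class k q)"
proof -
  have k: "k \<ge> 2" using H by simp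
  have ok: "okp k 0 0" using H by (auto simp: okp_def)
  have g: "good k 0 0 corner_lay" by (rule good_gen[OF ok]) (use H in \<open>auto simp: corner_lay_def\<close>)
  have r: "\<forall>x<k. alpha k 0 0 x \<in> set corner_syms" by (rule rng_gen[OF ok]) (auto simp: corner_syms_def)
  note C = corner_checks
  show ?thesis
    by (rule type_thm2[OF k g r C(1) C(2) C(3) C(4) C(5) C(6) C(7) corner_bf C(8) C(9) C(10) C(11) C(12) C(13) C(14) e s pi])
qed


lemma midge_apply:
  assumes H: "k \<ge> 2 \<and> odd k" and e: "external k q" and s: "alist k 0 0 q \<in> set midge_shape"
  and pi: "\<pi> permutes conn_class k q" "evenperm \<pi>"
  shows "\<pi> \<in> Rset k (conn_class k q)"
proof -
  have k: "k \<ge> 2" using H by simp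
  have ok: "okp k 0 0" using H by (auto simp: okp_def)
  have g: "good k 0 0 midge_lay" by (rule good_gen[OF ok]) (use H in \<open>auto simp: midge_lay_def\<close>)
  have r: "\<forall>x<k. alpha k 0 0 x \<in> set midge_syms" by (rule rng_gen[OF ok]) (auto simp: midge_syms_def)
  note C = midge_checks
  show ?thesis
    by (rule type_thm2[OF k g r C(1) C(2) C(3) C(4) C(5) C(6) C(7) midge_bf C(8) C(9) C(10) C(11) C(12) C(13) C(14) e s pi])
qed


lemma wing_apply:
  assumes H: "k \<ge> 2 \<and> 0 < a \<and> 2 * a < k - 1" and e: "external k q" and s: "alist k a 0 q \<in> set wing_shape"
  and pi: "\<pi> permutes conn_class k q" "evenperm \<pi>"
  shows "\<pi> \<in> Rset k (conn_class k q)"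
proof -
  have k: "k \<ge> 2" using H by simp
  have ok: "okp k a 0" using H by (auto simp: okp_def)
  have g: "good k a 0 wing_lay" by (rule good_gen[OF ok]) (use H in \<open>auto simp: wing_lay_def\<close>)
  have r: "\<forall>x<k. alpha k a 0 x \<in> set wing_syms" by (rule rng_gen[OF ok]) (auto simp: wing_syms_def)
  note C = wing_checks
  show ?thesis
    by (rule type_thm2[OF k g r C(1) C(2) C(3) C(4) C(5) C(6) C(7) wing_bf C(8) C(9) C(10) C(11) C(12) C(13) C(14) e s pi])
qed


lemma xcenter_apply:
  assumes H: "k \<ge> 2 \<and> 0 < a \<and> 2 * a < k - 1" and e: "external k q" and s: "alist k a 0 q \<in> set xcenter_shape"
  and pi: "\<pi> permutes conn_class k q" "evenperm \<pi>"
  shows "\<pi> \<in> Rset k (conn_class k q)"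
proof -
  have k: "k \<ge> 2" using H by simp
  have ok: "okp k a 0" using H by (auto simp: okp_def)
  have g: "good k a 0 xcenter_lay" by (rule good_gen[OF ok]) (use H in \<open>auto simp: xcenter_lay_def\<close>)
  have r: "\<forall>x<k. alpha k a 0 x \<in> set xcenter_syms" by (rule rng_gen[OF ok]) (auto simp: xcenter_syms_def)
  note C = xcenter_checks
  show ?thesis
    by (rule type_thm2[OF k g r C(1) C(2) C(3) C(4) C(5) C(6) C(7) xcenter_bf C(8) C(9) C(10) C(11) C(12) C(13) C(14) e s pi])
qed


lemma plus_apply:
  assumes H: "k \<ge> 2 \<and> 0 < a \<and> 2 * a < k - 1 \<and> odd k" and e: "external k q" and s: "alist k a 0 q \<in> set plus_shape"
  and pi: "\<pi> permutes conn_class k q" "evenperm \<pi>"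
  shows "\<pi> \<in> Rset k (conn_class k q)"
proof -
  have k: "k \<ge> 2" using H by simp
  have ok: "okp k a 0" using H by (auto simp: okp_def)
  have g: "good k a 0 plus_lay" by (rule good_gen[OF ok]) (use H in \<open>auto simp: plus_lay_def\<close>)
  have r: "\<forall>x<k. alpha k a 0 x \<in> set plus_syms" by (rule rng_gen[OF ok]) (auto simp: plus_syms_def)
  note C = plus_checks
  show ?thesis
    by (rule type_thm2[OF k g r C(1) C(2) C(3) C(4) C(5) C(6) C(7) plus_bf C(8) C(9) C(10) C(11) C(12) C(13) C(14) e s pi])
qed


lemma oblique_apply:
  assumes H: "k \<ge> 2 \<and> 0 < a \<and> 2 * a < k - 1 \<and> 0 < b \<and> 2 * b < k - 1 \<and> b \<noteq> a" and e: "external k q" and s: "alist k a b q \<in> set oblique_shape"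
  and pi: "\<pi> permutes conn_class k q" "evenperm \<pi>"
  shows "\<pi> \<in> Rset k (conn_class k q)"
proof -
  have k: "k \<ge> 2" using H by simp
  have ok: "okp k a b" using H by (auto simp: okp_def)
  have g: "good k a b oblique_lay" by (rule good_gen[OF ok]) (use H in \<open>auto simp: oblique_lay_def\<close>)
  have r: "\<forall>x<k. alpha k a b x \<in> set oblique_syms" by (rule rng_gen[OF ok]) (auto simp: oblique_syms_def)
  note C = oblique_checks
  show ?thesis
    by (rule type_thm2[OF k g r C(1) C(2) C(3) C(4) C(5) C(6) C(7) oblique_bf C(8) C(9) C(10) C(11) C(12) C(13) C(14) e s pi])
qed

definition frame_shape :: "sv list list" where "frame_shape = [[sZ, sM, sM], [sM, sZ, sM], [sM, sM, sZ], [sM, sM, sK], [sM, sK, sM], [sK, sM, sM]]"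
definition frame_rw :: "(nat \<times> nat) list list" where "frame_rw = [[], [(1, 0)], [(2, 0)], [(0, 2)], [(0, 1)], [(0, 1), (0, 1)]]"

lemma ex3: "(\<exists>n<(3::nat). P n) \<longleftrightarrow> P 0 \<or> P 1 \<or> P 2"
  unfolding lt3 by auto

lemma frame_checks:
  "\<forall>s\<in>set frame_shape. \<forall>i<3. \<forall>j<3. i \<noteq> j \<longrightarrow> spsi i j s \<in> set frame_shape"
  "\<forall>t\<in>set frame_shape. \<exists>w\<in>set frame_rw. srot w t = [sZ, sM, sM]"
  "\<forall>w\<in>set frame_rw. \<forall>x\<in>set w. vpair x"
  "\<forall>s\<in>set frame_shape. length s = 3 \<and> set s \<subseteq> set [sZ, sK, sM]"
  "\<forall>s\<in>set frame_shape. \<exists>n<3. s ! n \<in> {sZ, sK} \<and> (\<forall>i<3. i \<noteq> n \<longrightarrow> s ! i = sM)"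
  "\<forall>n<(3::nat). \<forall>t\<in>{sZ,sK}. [if n = 0 then t else sM, if n = 1 then t else sM, if n = 2 then t else sM] \<in> set frame_shape"
  by (simp_all add: frame_shape_def frame_rw_def all3 ex3 spsi_def srot_def)

lemma frame_eq:
  assumes k: "k \<ge> 2" and q: "q \<in> Mpos k" and q0: "q 0 = 0 \<or> q 0 = k - 1"
  and q1: "2 * q 1 = k - 1" and q2: "2 * q 2 = k - 1"
  shows "conn_class k q = frame_class k"
proof -
  let ?m = "(k - 1) div 2"
  have od: "odd k" using q1 k by presburger
  have k3: "k \<ge> 3" using od k by presburger
  have mm: "2 * ?m = k - 1" using od by presburger
  have m0: "?m \<noteq> 0" "?m \<noteq> k - 1" using mm k3 by auto
  have ok: "okp k 0 0" using k by (simp add: okp_def)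
  have g: "good k 0 0 [sZ, sK, sM]" by (rule good_gen[OF ok]) (use od in auto)
  have G3: "\<And>c x. c \<in> {sZ, sK, sM} \<Longrightarrow> x < k \<Longrightarrow> alpha k 0 0 x = c \<longleftrightarrow> x = gam k 0 0 c"
    using good_G3[OF g] by simp
  note FC = frame_checks
  have alM: "alpha k 0 0 ?m = sM" using aM[OF ok mm] .
  have alB: "\<And>x. x = 0 \<or> x = k - 1 \<Longrightarrow> alpha k 0 0 x \<in> {sZ, sK}" using aZ aK[OF k] by auto
  have frame_alist: "alist k 0 0 x \<in> set frame_shape"
    if x: "x \<in> Mpos k" "n < 3" "x n = 0 \<or> x n = k - 1" "\<forall>i<3. i \<noteq> n \<longrightarrow> x i = ?m" for x n
  proof -
    have t: "alpha k 0 0 (x n) \<in> {sZ, sK}" using alB x(3) .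
    have "alist k 0 0 x = [if n = 0 then alpha k 0 0 (x n) else sM, if n = 1 then alpha k 0 0 (x n) else sM,
                          if n = 2 then alpha k 0 0 (x n) else sM]"
      using x(4) alM by (auto simp: alist_def)
    then show ?thesis using FC(6) x(2) t by auto
  qed
  have q1': "q 1 = ?m" "q 2 = ?m" using q1 q2 mm by auto
  have alq: "alist k 0 0 q \<in> set frame_shape"
    using frame_alist[OF q _ q0] q1' lt3 by auto
  show ?thesis
  proof
    show "conn_class k q \<subseteq> frame_class k"
    proof
      fix x assume x: "x \<in> conn_class k q"
      have xM: "x \<in> Mpos k" using cc_Mpos[OF q x] .
      have s: "alist k 0 0 x \<in> set frame_shape" using class_shape[OF g q alq FC(1) x] .
      then obtain n where n: "n < 3" "alist k 0 0 x ! n \<in> {sZ, sK}" "\<forall>i<3. i \<noteq> n \<longrightarrow> alist k 0 0 x ! i = sM"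
        using FC(5) by blast
      have xlt: "\<And>i. i < 3 \<Longrightarrow> x i < k" using xM by (simp add: Mpos_def)
      have bn: "x n = 0 \<or> x n = k - 1"
      proof -
        have "alpha k 0 0 (x n) \<in> {sZ, sK}" using n alist_nth by metis
        then show ?thesis using G3[of sZ "x n"] G3[of sK "x n"] xlt[OF n(1)] by auto
      qed
      have oth: "x i = ?m" if "i < 3" "i \<noteq> n" for i
      proof -
        have "alpha k 0 0 (x i) = sM" using n that alist_nth by metis
        then show ?thesis using G3[of sM "x i"] xlt[OF that(1)] by simp
      qed
      have B: "Bset k x = {n}"
      proof -
        have H: "\<And>i. i < 3 \<Longrightarrow> i \<noteq> n \<Longrightarrow> \<not> (x i = 0 \<or> x i = k - 1)" using oth m0 by auto
        show ?thesis
        proof (rule set_eqI)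
          fix i show "i \<in> Bset k x \<longleftrightarrow> i \<in> {n}"
          proof
            assume "i \<in> Bset k x"
            then have "i < 3" "x i = 0 \<or> x i = k - 1" by (auto simp: Bset_def)
            then show "i \<in> {n}" using H[of i] by (cases "i = n") auto
          next
            assume "i \<in> {n}"
            then show "i \<in> Bset k x" using bn n(1) by (simp add: Bset_def)
          qed
        qed
      qed
      show "x \<in> frame_class k" unfolding frame_class_def using xM B oth by auto
    qed
  next
    show "frame_class k \<subseteq> conn_class k q"
    proof
      fix x assume x: "x \<in> frame_class k"
      have xM: "x \<in> Mpos k" and c1: "card (Bset k x) = 1" and oth: "\<forall>i<3. i \<notin> Bset k x \<longrightarrow> x i = ?m"
        using x by (auto simp: frame_class_def)
      obtain n where n: "Bset k x = {n}" using c1 card_1_singletonE by blast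
      have n3: "n < 3" and bn: "x n = 0 \<or> x n = k - 1" using n by (auto simp: Bset_def)
      have oth': "\<forall>i<3. i \<noteq> n \<longrightarrow> x i = ?m" using oth n by auto
      have ax: "alist k 0 0 x \<in> set frame_shape" using frame_alist[OF xM n3 bn oth'] .
      obtain w where w: "w \<in> set frame_rw" "srot w (alist k 0 0 x) = [sZ, sM, sM]" using FC(2) ax by blast
      obtain w' where w': "w' \<in> set frame_rw" "srot w' (alist k 0 0 q) = [sZ, sM, sM]" using FC(2) alq by blast
      have vw: "\<forall>y\<in>set w. vpair y" "\<forall>y\<in>set w'. vpair y" using FC(3) w w' by auto
      have c: "crot k w x \<in> conn_class k x" "alist k 0 0 (crot k w x) = [sZ, sM, sM]"
        using crot_props[OF g xM cc_self vw(1)] w by auto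
      have c': "crot k w' q \<in> conn_class k q" "alist k 0 0 (crot k w' q) = [sZ, sM, sM]"
        using crot_props[OF g q cc_self vw(2)] w' by auto
      have sub: "set [sZ, sM, sM] \<subseteq> set [sZ, sK, sM]" by simp
      have e1: "crot k w x = posof k 0 0 [sZ, sM, sM]"
        using alist_inj[OF g cc_Mpos[OF xM c(1)]] c(2) sub by metis
      have e2: "crot k w' q = posof k 0 0 [sZ, sM, sM]"
        using alist_inj[OF g cc_Mpos[OF q c'(1)]] c'(2) sub by metis
      have "x \<in> conn_class k (posof k 0 0 [sZ, sM, sM])" using cc_sym[OF xM] c(1) e1 by metis
      moreover have "conn_class k (posof k 0 0 [sZ, sM, sM]) = conn_class k q" using cc_eq[OF q] c'(1) e2 by metis
      ultimately show "x \<in> conn_class k q" by simp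
    qed
  qed
qed


lemma normalize:
  assumes e: "external k p0"
  obtains q where "q \<in> conn_class k p0" "q 0 = 0 \<or> q 0 = k - 1"
    "(q 2 = 0 \<or> q 2 = k - 1) \<longrightarrow> (q 1 = 0 \<or> q 1 = k - 1)"
proof -
  have p0M: "p0 \<in> Mpos k" using e by (simp add: external_def)
  obtain n where n: "n < 3" "p0 n = 0 \<or> p0 n = k - 1" using e by (auto simp: external_def Bset_def)
  have "\<exists>q1\<in>conn_class k p0. q1 0 = 0 \<or> q1 0 = k - 1"
  proof -
    consider "n = 0" | "n = 1" | "n = 2" using n(1) by linarith
    then show ?thesis
    proof cases
      case 1 then show ?thesis using n cc_self by blast
    next
      case 2
      have "psi k 1 0 p0 \<in> conn_class k p0" using psi_class[OF p0M cc_self] by simp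
      moreover have "psi k 1 0 p0 0 = p0 1" by (simp add: psi_def)
      ultimately show ?thesis using n 2 by metis
    next
      case 3
      have "psi k 2 0 p0 \<in> conn_class k p0" using psi_class[OF p0M cc_self] by simp
      moreover have "psi k 2 0 p0 0 = p0 2" by (simp add: psi_def)
      ultimately show ?thesis using n 3 by metis
    qed
  qed
  then obtain q1 where q1: "q1 \<in> conn_class k p0" "q1 0 = 0 \<or> q1 0 = k - 1" by blast
  show ?thesis
  proof (cases "(q1 2 = 0 \<or> q1 2 = k - 1) \<and> \<not> (q1 1 = 0 \<or> q1 1 = k - 1)")
    case True
    have "psi k 2 1 q1 \<in> conn_class k p0" using psi_class[OF p0M q1(1)] by simp
    moreover have "psi k 2 1 q1 0 = q1 0" "psi k 2 1 q1 1 = q1 2" by (simp_all add: psi_def)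
    ultimately show ?thesis using that q1 True by metis
  next
    case False then show ?thesis using that q1 by blast
  qed
qed

lemma mn_facts:
  fixes v k :: nat
  assumes v: "v < k" "v \<noteq> 0" "v \<noteq> k - 1"
  shows "0 < min v (k - 1 - v) \<and> 2 * min v (k - 1 - v) \<le> k - 1 \<and>
         (2 * v = k - 1 \<longleftrightarrow> 2 * min v (k - 1 - v) = k - 1) \<and>
         (v = min v (k - 1 - v) \<or> v = k - 1 - min v (k - 1 - v))"
  using v by (auto simp: min_def)

fun swp :: "sv \<Rightarrow> sv" where
  "swp sA = sB" | "swp sB = sA" | "swp sFA = sFB" | "swp sFB = sFA" | "swp s = s"

lemma alpha_swap:
  assumes ok: "okp k a b" and a: "a \<noteq> 0" and b: "b \<noteq> 0" and x: "x < k"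
  shows "alpha k b a x = swp (alpha k a b x)"
proof -
  have ok': "okp k b a" using ok a b by (auto simp: okp_def)
  have k: "k \<ge> 2" using okpD[OF ok] by simp
  from alpha_cases[OF ok x] show ?thesis
  proof (elim disjE conjE)
    assume "x = 0" "alpha k a b x = sZ" then show ?thesis using aZ by simp
  next
    assume "x = k - 1" "alpha k a b x = sK" then show ?thesis using aK[OF k] by simp
  next
    assume "a \<noteq> 0" "x = a" "alpha k a b x = sA" then show ?thesis using aB[OF ok'] by simp
  next
    assume "a \<noteq> 0" "x = k - 1 - a" "alpha k a b x = sFA" then show ?thesis using aFB[OF ok'] by simp
  next
    assume "b \<noteq> 0" "x = b" "alpha k a b x = sB" then show ?thesis using aA[OF ok'] by simp
  next
    assume "b \<noteq> 0" "x = k - 1 - b" "alpha k a b x = sFB" then show ?thesis using aFA[OF ok'] by simp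
  next
    assume "2 * x = k - 1" "alpha k a b x = sM" then show ?thesis using aM[OF ok'] by simp
  next
    assume h: "2 * x < k - 1" "x \<noteq> 0" "x \<noteq> a" "x \<noteq> b" "alpha k a b x = sW"
    then show ?thesis using aW[OF ok' h(1,2,4,3)] by simp
  next
    assume h: "k - 1 < 2 * x" "x \<noteq> k - 1" "x \<noteq> k - 1 - a" "x \<noteq> k - 1 - b" "alpha k a b x = sFW"
    then show ?thesis using aFW[OF ok' h(1) x h(2,4,3)] by simp
  qed
qed

lemma memS:
  assumes "\<forall>x\<in>S0. \<forall>y\<in>S1. \<forall>z\<in>S2. [x,y,z] \<in> L"
  and "alpha k a b (q 0) \<in> S0" "alpha k a b (q 1) \<in> S1" "alpha k a b (q 2) \<in> S2"
  shows "alist k a b q \<in> L"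
  using assms by (simp add: alist_def)

lemma shape_checks:
  "\<forall>x\<in>{sZ,sK}. \<forall>y\<in>{sZ,sK}. \<forall>z\<in>{sZ,sK}. [x,y,z] \<in> set corner_shape"
  "\<forall>x\<in>{sZ,sK}. \<forall>y\<in>{sZ,sK}. \<forall>z\<in>{sM}. [x,y,z] \<in> set midge_shape"
  "\<forall>x\<in>{sZ,sK}. \<forall>y\<in>{sZ,sK}. \<forall>z\<in>{sA,sFA}. [x,y,z] \<in> set wing_shape"
  "\<forall>x\<in>{sZ,sK}. \<forall>y\<in>{sM}. \<forall>z\<in>{sA,sFA}. [x,y,z] \<in> set plus_shape"
  "\<forall>x\<in>{sZ,sK}. \<forall>y\<in>{sA,sFA}. \<forall>z\<in>{sM}. [x,y,z] \<in> set plus_shape"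
  "\<forall>x\<in>{sZ,sK}. \<forall>y\<in>{sA,sFA}. \<forall>z\<in>{sA,sFA}. [x,y,z] \<in> set xcenter_shape"
  "\<forall>x\<in>{sZ,sK}. \<forall>y\<in>{sA,sFA}. \<forall>z\<in>{sB,sFB}. [x,y,z] \<in> set oblique_shape \<or> map swp [x,y,z] \<in> set oblique_shape"
  by (simp_all add: corner_shape_def midge_shape_def wing_shape_def plus_shape_def xcenter_shape_def oblique_shape_def)


lemma Rset_main:
  assumes k: "k \<ge> 2" and e: "external k p0" and fr: "odd k \<longrightarrow> conn_class k p0 \<noteq> frame_class k"
  and pi: "\<pi> permutes conn_class k p0" "evenperm \<pi>"
  shows "\<pi> \<in> Rset k (conn_class k p0)"
proof -
  have p0M: "p0 \<in> Mpos k" using e by (simp add: external_def)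
  obtain q where q: "q \<in> conn_class k p0" "q 0 = 0 \<or> q 0 = k - 1"
    "(q 2 = 0 \<or> q 2 = k - 1) \<longrightarrow> (q 1 = 0 \<or> q 1 = k - 1)" using normalize[OF e] by blast
  have Aq: "conn_class k q = conn_class k p0" using cc_eq[OF p0M q(1)] .
  have qM: "q \<in> Mpos k" using cc_Mpos[OF p0M q(1)] .
  have "0 \<in> Bset k q" using q(2) by (simp add: Bset_def)
  then have eq: "external k q" using qM by (auto simp: external_def)
  have lt: "q 0 < k" "q 1 < k" "q 2 < k" using qM by (auto simp: Mpos_def)
  have pi': "\<pi> permutes conn_class k q" "evenperm \<pi>" using pi Aq by simp_all
  have bdZK: "\<And>x a b. x = 0 \<or> x = k - 1 \<Longrightarrow> alpha k a b x \<in> {sZ, sK}" using aZ aK[OF k] by auto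
  have ok0: "okp k 0 0" using k by (simp add: okp_def)
  note SC = shape_checks
  have "\<pi> \<in> Rset k (conn_class k q)"
  proof (cases "q 1 = 0 \<or> q 1 = k - 1")
    case b1: True
    show ?thesis
    proof (cases "q 2 = 0 \<or> q 2 = k - 1")
      case True
      have "alist k 0 0 q \<in> set corner_shape"
        by (rule memS[OF SC(1)]) (use bdZK q(2) b1 True in auto)
      then show ?thesis using corner_apply[OF k eq _ pi'] by blast
    next
      case nb2: False
      have mf: "0 < min (q 2) (k - 1 - q 2) \<and> 2 * min (q 2) (k - 1 - q 2) \<le> k - 1 \<and>
         (2 * q 2 = k - 1 \<longleftrightarrow> 2 * min (q 2) (k - 1 - q 2) = k - 1) \<and>
         (q 2 = min (q 2) (k - 1 - q 2) \<or> q 2 = k - 1 - min (q 2) (k - 1 - q 2))"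
        using mn_facts[OF lt(3)] nb2 by (meson de_Morgan_disj)
      show ?thesis
      proof (cases "2 * q 2 = k - 1")
        case True
        have od: "odd k" using True k by presburger
        have "alpha k 0 0 (q 2) = sM" using aM[OF ok0 True] .
        then have "alist k 0 0 q \<in> set midge_shape"
          by (intro memS[OF SC(2)]) (use bdZK q(2) b1 in auto)
        then show ?thesis using midge_apply[of k q \<pi>] k od eq pi' by blast
      next
        case False
        define a where "a = min (q 2) (k - 1 - q 2)"
        have a: "0 < a" "2 * a < k - 1" "q 2 = a \<or> q 2 = k - 1 - a" using mf False unfolding a_def by auto
        have ok: "okp k a 0" using k a by (simp add: okp_def)
        have "alpha k a 0 (q 2) \<in> {sA, sFA}" using aA[OF ok] aFA[OF ok] a by auto
        then have "alist k a 0 q \<in> set wing_shape"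
          by (intro memS[OF SC(3)]) (use bdZK q(2) b1 in auto)
        then show ?thesis using wing_apply[of k a q \<pi>] k a eq pi' by blast
      qed
    qed
  next
    case nb1: False
    have nb2: "\<not> (q 2 = 0 \<or> q 2 = k - 1)" using q(3) nb1 by blast
    have mf1: "0 < min (q 1) (k - 1 - q 1) \<and> 2 * min (q 1) (k - 1 - q 1) \<le> k - 1 \<and>
         (2 * q 1 = k - 1 \<longleftrightarrow> 2 * min (q 1) (k - 1 - q 1) = k - 1) \<and>
         (q 1 = min (q 1) (k - 1 - q 1) \<or> q 1 = k - 1 - min (q 1) (k - 1 - q 1))"
      using mn_facts[OF lt(2)] nb1 by (meson de_Morgan_disj)
    have mf2: "0 < min (q 2) (k - 1 - q 2) \<and> 2 * min (q 2) (k - 1 - q 2) \<le> k - 1 \<and>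
         (2 * q 2 = k - 1 \<longleftrightarrow> 2 * min (q 2) (k - 1 - q 2) = k - 1) \<and>
         (q 2 = min (q 2) (k - 1 - q 2) \<or> q 2 = k - 1 - min (q 2) (k - 1 - q 2))"
      using mn_facts[OF lt(3)] nb2 by (meson de_Morgan_disj)
    define a where "a = min (q 1) (k - 1 - q 1)"
    define b where "b = min (q 2) (k - 1 - q 2)"
    consider "2 * q 1 = k - 1" "2 * q 2 = k - 1" | "2 * q 1 = k - 1" "2 * q 2 \<noteq> k - 1"
      | "2 * q 1 \<noteq> k - 1" "2 * q 2 = k - 1" | "2 * q 1 \<noteq> k - 1" "2 * q 2 \<noteq> k - 1" by blast
    then show ?thesis
    proof cases
      case 1
      have "conn_class k q = frame_class k" using frame_eq[OF k qM q(2) 1] .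
      moreover have "odd k" using 1 k by presburger
      ultimately show ?thesis using fr Aq by simp
    next
      case 2
      have od: "odd k" using 2 k by presburger
      have bb: "0 < b" "2 * b < k - 1" "q 2 = b \<or> q 2 = k - 1 - b" using mf2 2 unfolding b_def by auto
      have ok: "okp k b 0" using k bb by (simp add: okp_def)
      have "alpha k b 0 (q 2) \<in> {sA, sFA}" using aA[OF ok] aFA[OF ok] bb by auto
      moreover have "alpha k b 0 (q 1) = sM" using aM[OF ok 2(1)] .
      ultimately have "alist k b 0 q \<in> set plus_shape"
        by (intro memS[OF SC(4)]) (use bdZK q(2) in auto)
      then show ?thesis using plus_apply[of k b q \<pi>] k bb od eq pi' by blast
    next
      case 3
      have od: "odd k" using 3 k by presburger
      have aa: "0 < a" "2 * a < k - 1" "q 1 = a \<or> q 1 = k - 1 - a" using mf1 3 unfolding a_def by auto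
      have ok: "okp k a 0" using k aa by (simp add: okp_def)
      have "alpha k a 0 (q 1) \<in> {sA, sFA}" using aA[OF ok] aFA[OF ok] aa by auto
      moreover have "alpha k a 0 (q 2) = sM" using aM[OF ok 3(2)] .
      ultimately have "alist k a 0 q \<in> set plus_shape"
        by (intro memS[OF SC(5)]) (use bdZK q(2) in auto)
      then show ?thesis using plus_apply[of k a q \<pi>] k aa od eq pi' by blast
    next
      case 4
      have aa: "0 < a" "2 * a < k - 1" "q 1 = a \<or> q 1 = k - 1 - a" using mf1 4 unfolding a_def by auto
      have bb: "0 < b" "2 * b < k - 1" "q 2 = b \<or> q 2 = k - 1 - b" using mf2 4 unfolding b_def by auto
      show ?thesis
      proof (cases "a = b")
        case True
        have ok: "okp k a 0" using k aa by (simp add: okp_def)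
        have "alpha k a 0 (q 1) \<in> {sA, sFA}" "alpha k a 0 (q 2) \<in> {sA, sFA}"
          using aA[OF ok] aFA[OF ok] aa bb True by auto
        then have "alist k a 0 q \<in> set xcenter_shape"
          by (intro memS[OF SC(6)]) (use bdZK q(2) in auto)
        then show ?thesis using xcenter_apply[of k a q \<pi>] k aa eq pi' by blast
      next
        case False
        have ok: "okp k a b" using k aa bb False by (auto simp: okp_def)
        have a0: "a \<noteq> 0" and b0: "b \<noteq> 0" using aa bb by auto
        have c1: "alpha k a b (q 1) \<in> {sA, sFA}"
        proof (cases "q 1 = a")
          case True then show ?thesis unfolding True aA[OF ok a0] by simp
        next
          case False then have e: "q 1 = k - 1 - a" using aa(3) by simp
          show ?thesis unfolding e aFA[OF ok a0] by simp
        qed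
        have c2: "alpha k a b (q 2) \<in> {sB, sFB}"
        proof (cases "q 2 = b")
          case True then show ?thesis unfolding True aB[OF ok b0] by simp
        next
          case False then have e: "q 2 = k - 1 - b" using bb(3) by simp
          show ?thesis unfolding e aFB[OF ok b0] by simp
        qed
        have c0: "alpha k a b (q 0) \<in> {sZ, sK}" using bdZK[OF q(2)] .
        have al: "alist k a b q = [alpha k a b (q 0), alpha k a b (q 1), alpha k a b (q 2)]" by (simp add: alist_def)
        have "[alpha k a b (q 0), alpha k a b (q 1), alpha k a b (q 2)] \<in> set oblique_shape \<or>
              map swp [alpha k a b (q 0), alpha k a b (q 1), alpha k a b (q 2)] \<in> set oblique_shape"
          using SC(7) c0 c1 c2 by blast
        then consider "alist k a b q \<in> set oblique_shape" | "map swp (alist k a b q) \<in> set oblique_shape"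
          unfolding al by blast
        then show ?thesis
        proof cases
          case 1
          then show ?thesis using oblique_apply[of k a b q \<pi>] k aa bb False eq pi' by blast
        next
          case 2
          have "alist k b a q = map swp (alist k a b q)"
            using alpha_swap[OF ok] aa bb lt by (simp add: alist_def)
          then have "alist k b a q \<in> set oblique_shape" using 2 by simp
          then show ?thesis using oblique_apply[of k b a q \<pi>] k aa bb False eq pi' by auto
        qed
      qed
    qed
  qed
  then show ?thesis using Aq by simp
qed

theorem mainTheorem5:
  fixes k :: nat and A :: "(nat \<Rightarrow> nat) set" and \<pi> :: "(nat \<Rightarrow> nat) \<Rightarrow> (nat \<Rightarrow> nat)"
  assumes "k \<ge> 2"
    and "is_conn_class k A"
    and "odd k \<longrightarrow> A \<noteq> frame_class k"
    and "\<pi> permutes A"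
    and "evenperm \<pi>"
  shows "\<exists>ms. combination k ms \<and>
           (\<forall>p \<in> A. comb_pos k ms p = \<pi> p) \<and>
           (\<forall>q l. external k q \<and> q \<notin> A \<and> l \<in> Bset k q \<longrightarrow> comb_X k ms (q, l) = (q, l))"
proof -
  obtain p0 where p0: "external k p0" "A = conn_class k p0" using assms(2) by (auto simp: is_conn_class_def)
  have "\<pi> \<in> Rset k A" using Rset_main[OF assms(1) p0(1)] assms(3-5) p0(2) by simp
  then show ?thesis unfolding Rset_def by blast
qed


end
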